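(* Let $|\phi_{\mathrm w}(\theta)\rangle$ be the 2-d Ising whip state on the $L\times L$ lattice. For each $L$ let $(i_L,j_L)$ be a nearest-neighbour pair of sites, $i_L=(a_L,b_L)$ and $j_L\in\{(a_L+1,b_L),(a_L,b_L+1)\}$, such that $\min(a_L,b_L)\to\infty$ and $j_L\in\Lambda_L$. Then for every $\theta\in\mathbb R$, $$\lim_{L\to\infty}\langle Z_{i_L}Z_{j_L}\rangle_\theta=-\sum_{\mathcal L=1}^\infty\frac{4^{\mathcal L-1}\Gamma(\mathcal L-\frac12)}{\sqrt\pi\,\mathcal L!}(\cos\theta\sin\theta)^{2\mathcal L-1}=\frac{|\cos2\theta|-1}{\sin2\theta},$$ where the right-hand side is interpreted as $0$ when $\sin2\theta=0$. Moreover the Ising energy density satisfies $\lim_{L\to\infty}\langle H_L\rangle_\theta=\frac{1-|\cos2\theta|}{\sin2\theta}$ for $H_L=-\frac{1}{2L(L-1)}\sum_{\langle i,j\rangle}Z_iZ_j$ (sum over all nearest-neighbour pairs of $\Lambda_L$).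
   Context: 2-d Ising whip circuit: for $L\ge2$, $\Lambda_L=\{0,\dots,L-1\}^2$, one qubit per site, $N=L^2$. Directed edges $(a,b)\to(a+1,b)$ and $(a,b)\to(a,b+1)$ whenever the target lies in $\Lambda_L$. $\deg^-(v)$ is the number of incoming edges of $v$ (so $\deg^-=1$ on the lines $a=0$ or $b=0$ except at $(0,0)$, and $\deg^-=2$ otherwise). For each edge $u\to v$ let $G_{u\to v}(\theta)=\exp(-\mathrm i\,\theta\,Z_uY_v/\deg^-(v))$ with Pauli matrices $X,Y,Z$. The whip state is $|\phi_{\mathrm w}(\theta)\rangle=\prod G_{u\to v}(\theta)|+\rangle^{\otimes N}$, $|+\rangle=(|0\rangle+|1\rangle)/\sqrt2$, with gates applied in order of increasing $a+b$ of the target $v=(a,b)$ (gates with targets in the same layer commute). $\langle A\rangle_\theta=\langle\phi_{\mathrm w}(\theta)|A|\phi_{\mathrm w}(\theta)\rangle$. *)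

theory Defs
  imports "HOL-Analysis.Analysis"
begin

text \<open>Sites are pairs (a,b) of naturals; the lattice is {0..L-1}^2.
  A computational basis state is a configuration s :: site => bool
  (False = |0>, True = |1>), equal to False outside the lattice.\<close>

type_synonym site = "nat \<times> nat"
type_synonym config = "site \<Rightarrow> bool"
type_synonym qstate = "config \<Rightarrow> complex"

definition lattice :: "nat \<Rightarrow> site set" where
  "lattice L = {0..<L} \<times> {0..<L}"

definition configs :: "nat \<Rightarrow> config set" where
  "configs L = {s. \<forall>x. x \<notin> lattice L \<longrightarrow> \<not> s x}"

text \<open>Pauli operators acting on qubit v.  Z|0>=|0>, Z|1>=-|1>;
  Y|0> = i|1>, Y|1> = -i|0>.\<close>

definition pauliZ :: "site \<Rightarrow> qstate \<Rightarrow> qstate" where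
  "pauliZ v \<psi> = (\<lambda>s. (if s v then -1 else 1) * \<psi> s)"

definition pauliY :: "site \<Rightarrow> qstate \<Rightarrow> qstate" where
  "pauliY v \<psi> = (\<lambda>s. (if s v then \<i> else - \<i>) * \<psi> (s(v := \<not> s v)))"

definition indeg :: "site \<Rightarrow> nat" where
  "indeg v = (if fst v > 0 then 1 else 0) + (if snd v > 0 then 1 else 0)"

text \<open>The gate G_{u->v}(theta) = exp(-i theta Z_u Y_v / deg v)
  = cos(phi) I - i sin(phi) Z_u Y_v  with phi = theta / deg v,
  since (Z_u Y_v)^2 = I.\<close>

definition gate :: "real \<Rightarrow> site \<times> site \<Rightarrow> qstate \<Rightarrow> qstate" where
  "gate \<theta> e \<psi> = (let \<phi> = \<theta> / real (indeg (snd e)) in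
      (\<lambda>s. complex_of_real (cos \<phi>) * \<psi> s
           - \<i> * complex_of_real (sin \<phi>) * pauliZ (fst e) (pauliY (snd e) \<psi>) s))"

definition in_edges :: "site \<Rightarrow> (site \<times> site) list" where
  "in_edges v = (case v of (a, b) \<Rightarrow>
     (if a > 0 then [((a - 1, b), (a, b))] else []) @
     (if b > 0 then [((a, b - 1), (a, b))] else []))"

definition layer_edges :: "nat \<Rightarrow> nat \<Rightarrow> (site \<times> site) list" where
  "layer_edges L k = concat (map (\<lambda>a. in_edges (a, k - a))
      (filter (\<lambda>a. a \<le> k \<and> k - a < L) [0..<L]))"

text \<open>All edges, ordered by increasing layer of the target (first element applied first).\<close>

definition whip_edges :: "nat \<Rightarrow> (site \<times> site) list" where
  "whip_edges L = concat (map (layer_edges L) [1..<2 * L - 1])"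

definition plus_state :: "nat \<Rightarrow> qstate" where
  "plus_state L = (\<lambda>s. if s \<in> configs L then complex_of_real (1 / sqrt (2 ^ (L * L))) else 0)"

definition whip_state :: "nat \<Rightarrow> real \<Rightarrow> qstate" where
  "whip_state L \<theta> = foldl (\<lambda>\<psi> e. gate \<theta> e \<psi>) (plus_state L) (whip_edges L)"

definition expval :: "nat \<Rightarrow> qstate \<Rightarrow> (qstate \<Rightarrow> qstate) \<Rightarrow> complex" where
  "expval L \<psi> A = (\<Sum>s\<in>configs L. cnj (\<psi> s) * A \<psi> s)"

definition whip_ZZ :: "nat \<Rightarrow> real \<Rightarrow> site \<Rightarrow> site \<Rightarrow> complex" where
  "whip_ZZ L \<theta> i j = expval L (whip_state L \<theta>) (\<lambda>\<psi>. pauliZ i (pauliZ j \<psi>))"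

definition nn_pairs :: "nat \<Rightarrow> (site \<times> site) set" where
  "nn_pairs L = {(i, j). i \<in> lattice L \<and> j \<in> lattice L \<and>
       (j = (fst i + 1, snd i) \<or> j = (fst i, snd i + 1))}"

definition ising_energy :: "nat \<Rightarrow> real \<Rightarrow> complex" where
  "ising_energy L \<theta> = - complex_of_real (1 / (2 * real L * (real L - 1))) *
      (\<Sum>(i, j)\<in>nn_pairs L. whip_ZZ L \<theta> i j)"

text \<open>Series term, for n >= 1.\<close>

definition whip_term :: "real \<Rightarrow> nat \<Rightarrow> real" where
  "whip_term \<theta> n = 4 ^ (n - 1) * Gamma (real n - 1 / 2) / (sqrt pi * fact n)
      * (cos \<theta> * sin \<theta>) ^ (2 * n - 1)"

definition whip_limit :: "real \<Rightarrow> real" where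
  "whip_limit \<theta> = (if sin (2 * \<theta>) = 0 then 0
      else (\<bar>cos (2 * \<theta>)\<bar> - 1) / sin (2 * \<theta>))"

end

theory Submission
  imports Defs
begin

definition zv :: "config \<Rightarrow> site \<Rightarrow> real" where
  "zv s v = (if s v then -1 else 1)"

definition rho :: "real \<Rightarrow> bool \<Rightarrow> real" where
  "rho \<beta> b = (if b then sin (\<beta> + pi/4) else cos (\<beta> + pi/4))"

definition betaL :: "real \<Rightarrow> (site \<times> site) list \<Rightarrow> site \<Rightarrow> config \<Rightarrow> real" where
  "betaL \<theta> es v s = sum_list (map (\<lambda>e. if snd e = v then \<theta> / real (indeg v) * zv s (fst e) else 0) es)"

definition layer :: "site \<Rightarrow> nat" where "layer v = fst v + snd v"

lemma betaL_Nil[simp]: "betaL \<theta> [] v s = 0" by (simp add: betaL_def)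

lemma betaL_snoc: "betaL \<theta> (es @ [e]) v s = betaL \<theta> es v s +
   (if snd e = v then \<theta> / real (indeg v) * zv s (fst e) else 0)"
  by (simp add: betaL_def)

lemma betaL_upd:
  assumes "\<forall>e\<in>set es. fst e \<noteq> w"
  shows "betaL \<theta> es v (s(w := b)) = betaL \<theta> es v s"
  unfolding betaL_def
  by (rule arg_cong[where f = sum_list], rule map_cong) (use assms in \<open>auto simp: zv_def\<close>)

lemma rho_rot:
  assumes "z = 1 \<or> z = -1"
  shows "rho (\<beta> + \<phi> * z) b = cos \<phi> * rho \<beta> b + sin \<phi> * z * (if b then 1 else -1) * rho \<beta> (\<not> b)"
  using assms
  by (auto simp: rho_def sin_add cos_add algebra_simps)

lemma rho_zero: "rho 0 b = 1 / sqrt 2"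
  by (auto simp: rho_def sin_45 cos_45 real_div_sqrt)

lemma card_lattice: "card (lattice L) = L * L"
  by (simp add: lattice_def card_cartesian_product)

lemma finite_lattice[simp]: "finite (lattice L)"
  by (simp add: lattice_def)

lemma plus_state_prod:
  "plus_state L = (\<lambda>s. if s \<in> configs L then complex_of_real (\<Prod>v\<in>lattice L. rho (betaL \<theta> [] v s) (s v)) else 0)"
proof -
  have "(\<Prod>v\<in>lattice L. rho (betaL \<theta> [] v s) (s v)) = (1 / sqrt 2) ^ (L * L)" for s
    by (simp add: rho_zero card_lattice)
  moreover have "(1 / sqrt 2) ^ (L * L) = 1 / sqrt (2 ^ (L * L))"
    by (simp add: real_sqrt_power power_one_over)
  ultimately show ?thesis by (simp add: plus_state_def fun_eq_iff)
qed

lemma configs_flip: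
  assumes "v \<in> lattice L"
  shows "(s(v := b) \<in> configs L) = (s \<in> configs L)"
  using assms by (auto simp: configs_def)

lemma foldl_gate:
  assumes "\<forall>e\<in>set es. fst e \<in> lattice L \<and> snd e \<in> lattice L \<and> layer (fst e) + 1 = layer (snd e)"
    and "sorted_wrt (\<lambda>e e'. layer (snd e) \<le> layer (snd e')) es"
  shows "foldl (\<lambda>\<psi> e. gate \<theta> e \<psi>) (plus_state L) es =
    (\<lambda>s. if s \<in> configs L then complex_of_real (\<Prod>v\<in>lattice L. rho (betaL \<theta> es v s) (s v)) else 0)"
  using assms
proof (induction es rule: rev_induct)
  case Nil
  then show ?case using plus_state_prod by simp
next
  case (snoc e es)
  obtain u v where e: "e = (u, v)" by (cases e)
  have uv: "u \<in> lattice L" "v \<in> lattice L" "layer u + 1 = layer v"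
    using snoc.prems(1) e by auto
  have src: "\<forall>e'\<in>set es. fst e' \<noteq> v"
  proof
    fix e' assume "e' \<in> set es"
    then have "layer (snd e') \<le> layer v" "layer (fst e') + 1 = layer (snd e')"
      using snoc.prems e by (auto simp: sorted_wrt_append)
    then show "fst e' \<noteq> v" by auto
  qed
  have uv': "u \<noteq> v" using uv by auto
  have IH: "foldl (\<lambda>\<psi> e. gate \<theta> e \<psi>) (plus_state L) es =
    (\<lambda>s. if s \<in> configs L then complex_of_real (\<Prod>v\<in>lattice L. rho (betaL \<theta> es v s) (s v)) else 0)"
    using snoc by (auto simp: sorted_wrt_append)
  define \<psi> where "\<psi> = foldl (\<lambda>\<psi> e. gate \<theta> e \<psi>) (plus_state L) es"
  define \<phi> where "\<phi> = \<theta> / real (indeg v)"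
  define P where "P s = (\<Prod>w\<in>lattice L - {v}. rho (betaL \<theta> es w s) (s w))" for s
  have Pflip: "P (s(v := b)) = P s" for s b
    unfolding P_def by (rule prod.cong) (auto simp: betaL_upd[OF src])
  have split: "(\<Prod>w\<in>lattice L. f w) = f v * (\<Prod>w\<in>lattice L - {v}. f w)" for f :: "site \<Rightarrow> real"
    using uv(2) by (simp add: prod.remove)
  have new: "(\<Prod>w\<in>lattice L. rho (betaL \<theta> (es @ [e]) w s) (s w)) =
      rho (betaL \<theta> es v s + \<phi> * zv s u) (s v) * P s" for s
  proof -
    have "(\<Prod>w\<in>lattice L - {v}. rho (betaL \<theta> (es @ [e]) w s) (s w)) = P s"
      unfolding P_def by (rule prod.cong) (auto simp: betaL_snoc e)
    then show ?thesis
      by (subst split) (simp add: betaL_snoc e \<phi>_def)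
  qed
  have old: "\<psi> s = (if s \<in> configs L then complex_of_real (rho (betaL \<theta> es v s) (s v) * P s) else 0)" for s
    unfolding \<psi>_def IH P_def by (subst split) simp
  show ?case
  proof (rule ext)
    fix s
    have "foldl (\<lambda>\<psi> e. gate \<theta> e \<psi>) (plus_state L) (es @ [e]) s = gate \<theta> e \<psi> s"
      by (simp add: \<psi>_def)
    also have "\<dots> = complex_of_real (cos \<phi>) * \<psi> s - \<i> * complex_of_real (sin \<phi>) *
        ((if s u then -1 else 1) * ((if s v then \<i> else - \<i>) * \<psi> (s(v := \<not> s v))))"
      by (simp add: gate_def e \<phi>_def pauliZ_def pauliY_def Let_def uv')
    also have "\<dots> = (if s \<in> configs L then complex_of_real
        (rho (betaL \<theta> es v s + \<phi> * zv s u) (s v) * P s) else 0)"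
    proof (cases "s \<in> configs L")
      case True
      have z: "zv s u = 1 \<or> zv s u = -1" by (simp add: zv_def)
      have b: "betaL \<theta> es v (s(v := \<not> s v)) = betaL \<theta> es v s" by (rule betaL_upd[OF src])
      have "rho (betaL \<theta> es v s + \<phi> * zv s u) (s v) = cos \<phi> * rho (betaL \<theta> es v s) (s v)
         + sin \<phi> * zv s u * (if s v then 1 else -1) * rho (betaL \<theta> es v s) (\<not> s v)"
        by (rule rho_rot[OF z])
      then show ?thesis
        using True by (simp add: old configs_flip[OF uv(2)] Pflip b zv_def) (auto simp: algebra_simps)
    next
      case False
      then show ?thesis by (simp add: old configs_flip[OF uv(2)])
    qed
    also have "\<dots> = (\<lambda>s. if s \<in> configs L then complex_of_real (\<Prod>v\<in>lattice L. rho (betaL \<theta> (es @ [e]) v s) (s v)) else 0) s"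
      by (simp add: new)
    finally show "foldl (\<lambda>\<psi> e. gate \<theta> e \<psi>) (plus_state L) (es @ [e]) s = (\<lambda>s. if s \<in> configs L then complex_of_real (\<Prod>v\<in>lattice L. rho (betaL \<theta> (es @ [e]) v s) (s v)) else 0) s" .
  qed
qed


definition bf :: "real \<Rightarrow> site \<Rightarrow> config \<Rightarrow> real" where
  "bf \<theta> v s = sum_list (map (\<lambda>e. \<theta> / real (indeg v) * zv s (fst e)) (in_edges v))"

lemma in_edges_props:
  assumes "e \<in> set (in_edges v)"
  shows "snd e = v \<and> layer (fst e) + 1 = layer v \<and> fst (fst e) \<le> fst v \<and> snd (fst e) \<le> snd v"
  using assms by (cases v) (auto simp: in_edges_def layer_def split: if_splits)

lemma layer_edges_props:
  assumes "e \<in> set (layer_edges L k)"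
  shows "layer (snd e) = k \<and> snd e \<in> lattice L \<and> fst e \<in> lattice L"
proof -
  obtain a where a: "a < L" "a \<le> k" "k - a < L" "e \<in> set (in_edges (a, k - a))"
    using assms by (auto simp: layer_edges_def)
  have "snd e = (a, k - a)" "layer (fst e) + 1 = layer (a, k - a)"
     "fst (fst e) \<le> a" "snd (fst e) \<le> k - a"
    using in_edges_props[OF a(4)] by auto
  moreover obtain x y where xy: "fst e = (x, y)" by (cases "fst e")
  ultimately show ?thesis using a by (auto simp: layer_def lattice_def)
qed

lemma whip_edges_props:
  assumes "e \<in> set (whip_edges L)"
  shows "fst e \<in> lattice L \<and> snd e \<in> lattice L \<and> layer (fst e) + 1 = layer (snd e)"
proof -
  obtain k where "e \<in> set (layer_edges L k)" using assms by (auto simp: whip_edges_def)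
  moreover then obtain a where a: "e \<in> set (in_edges (a, k - a))"
    by (auto simp: layer_edges_def)
  ultimately show ?thesis using layer_edges_props[of e L k] in_edges_props[OF a] by simp
qed

lemma sorted_const_block: "\<forall>e\<in>set xs. g e = (k::nat) \<Longrightarrow> sorted_wrt (\<lambda>e e'. g e \<le> g e') xs"
  by (induction xs) auto

lemma sorted_concat_blocks:
  assumes "sorted ks" "\<forall>k\<in>set ks. \<forall>e\<in>set (f k). g e = k"
  shows "sorted_wrt (\<lambda>e e'. g e \<le> (g e' :: nat)) (concat (map f ks))"
  using assms
proof (induction ks)
  case Nil then show ?case by simp
next
  case (Cons k ks)
  have "sorted_wrt (\<lambda>e e'. g e \<le> g e') (f k)"
    using Cons.prems(2) by (intro sorted_const_block[of _ _ k]) simp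
  then show ?case using Cons by (auto simp: sorted_wrt_append)
qed

lemma whip_edges_sorted:
  "sorted_wrt (\<lambda>e e'. layer (snd e) \<le> layer (snd e')) (whip_edges L)"
  unfolding whip_edges_def
  by (rule sorted_concat_blocks) (auto simp: layer_edges_props)

lemma sum_list_zero: "\<forall>y\<in>set xs. g y = (0::real) \<Longrightarrow> sum_list (map g xs) = 0"
  by (induction xs) auto

lemma sum_list_single:
  assumes "distinct xs" "\<forall>y\<in>set xs. y \<noteq> x0 \<longrightarrow> g y = (0::real)"
  shows "sum_list (map g xs) = (if x0 \<in> set xs then g x0 else 0)"
  using assms by (induction xs) (auto simp: sum_list_zero)

lemma betaL_append: "betaL \<theta> (xs @ ys) v s = betaL \<theta> xs v s + betaL \<theta> ys v s"
  by (simp add: betaL_def)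

lemma betaL_concat: "betaL \<theta> (concat xss) v s = sum_list (map (\<lambda>xs. betaL \<theta> xs v s) xss)"
  by (induction xss) (auto simp: betaL_append)

lemma betaL_zero: "\<forall>e\<in>set es. snd e \<noteq> v \<Longrightarrow> betaL \<theta> es v s = 0"
  unfolding betaL_def by (induction es) auto

lemma betaL_in_edges: "betaL \<theta> (in_edges v) v s = bf \<theta> v s"
  unfolding betaL_def bf_def
  by (rule arg_cong[where f=sum_list], rule map_cong) (auto dest: in_edges_props)

lemma betaL_whip:
  assumes v: "v \<in> lattice L"
  shows "betaL \<theta> (whip_edges L) v s = bf \<theta> v s"
proof -
  have "betaL \<theta> (whip_edges L) v s = sum_list (map (\<lambda>k. betaL \<theta> (layer_edges L k) v s) [1..<2 * L - 1])"
    by (simp add: whip_edges_def betaL_concat o_def)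
  also have "\<dots> = (if layer v \<in> set [1..<2 * L - 1] then betaL \<theta> (layer_edges L (layer v)) v s else 0)"
  proof (rule sum_list_single)
    show "\<forall>y\<in>set [1..<2 * L - 1]. y \<noteq> layer v \<longrightarrow> betaL \<theta> (layer_edges L y) v s = 0"
    proof (intro ballI impI betaL_zero)
      fix y e assume "y \<noteq> layer v" "e \<in> set (layer_edges L y)"
      then show "snd e \<noteq> v" using layer_edges_props[of e] by auto
    qed
  qed simp
  also have "\<dots> = bf \<theta> v s"
  proof (cases "layer v = 0")
    case True
    then have "v = (0, 0)" by (cases v) (auto simp: layer_def)
    then show ?thesis using True by (simp add: bf_def in_edges_def)
  next
    case False
    obtain a b where vab: "v = (a, b)" by (cases v)
    have ab: "a < L" "b < L" using v vab by (auto simp: lattice_def)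
    have in1: "layer v \<in> set [1..<2 * L - 1]" using False ab vab by (auto simp: layer_def)
    let ?as = "filter (\<lambda>a'. a' \<le> a + b \<and> a + b - a' < L) [0..<L]"
    have "betaL \<theta> (layer_edges L (layer v)) v s = sum_list (map (\<lambda>a'. betaL \<theta> (in_edges (a', a + b - a')) v s) ?as)"
      by (simp add: layer_edges_def betaL_concat vab layer_def o_def)
    also have "\<dots> = (if a \<in> set ?as then betaL \<theta> (in_edges (a, a + b - a)) v s else 0)"
    proof (rule sum_list_single)
      show "distinct ?as" by simp
      show "\<forall>y\<in>set ?as. y \<noteq> a \<longrightarrow> betaL \<theta> (in_edges (y, a + b - y)) v s = 0"
      proof (intro ballI impI betaL_zero)
        fix y e assume "y \<noteq> a" "e \<in> set (in_edges (y, a + b - y))"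
        then show "snd e \<noteq> v" using in_edges_props[of e] vab by auto
      qed
    qed
    also have "\<dots> = bf \<theta> v s" using ab by (simp add: vab betaL_in_edges)
    finally show ?thesis using in1 by simp
  qed
  finally show ?thesis .
qed

lemma whip_state_prod:
  "whip_state L \<theta> = (\<lambda>s. if s \<in> configs L then complex_of_real (\<Prod>v\<in>lattice L. rho (bf \<theta> v s) (s v)) else 0)"
proof -
  have "whip_state L \<theta> = (\<lambda>s. if s \<in> configs L then complex_of_real (\<Prod>v\<in>lattice L. rho (betaL \<theta> (whip_edges L) v s) (s v)) else 0)"
    unfolding whip_state_def
    by (intro foldl_gate ballI whip_edges_props whip_edges_sorted)
  also have "\<dots> = (\<lambda>s. if s \<in> configs L then complex_of_real (\<Prod>v\<in>lattice L. rho (bf \<theta> v s) (s v)) else 0)"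
    by (auto simp: fun_eq_iff betaL_whip intro!: prod.cong)
  finally show ?thesis .
qed


definition pp :: "real \<Rightarrow> site \<Rightarrow> config \<Rightarrow> real" where
  "pp \<theta> v s = (rho (bf \<theta> v s) (s v))\<^sup>2"

definition cfgs :: "site set \<Rightarrow> config set" where
  "cfgs S = {s. \<forall>x. x \<notin> S \<longrightarrow> \<not> s x}"

definition WW :: "real \<Rightarrow> site set \<Rightarrow> config \<Rightarrow> real" where
  "WW \<theta> S s = (\<Prod>v\<in>S. pp \<theta> v s)"

definition ExS :: "real \<Rightarrow> site set \<Rightarrow> (config \<Rightarrow> real) \<Rightarrow> real" where
  "ExS \<theta> S f = (\<Sum>s\<in>cfgs S. WW \<theta> S s * f s)"

definition mm :: "site \<Rightarrow> config \<Rightarrow> real" where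
  "mm v s = sum_list (map (\<lambda>e. zv s (fst e)) (in_edges v)) / real (indeg v)"

definition par :: "site \<Rightarrow> site set" where
  "par v = fst ` set (in_edges v)"

definition dclosed :: "site set \<Rightarrow> bool" where
  "dclosed S = (\<forall>v\<in>S. par v \<subseteq> S)"

definition dep :: "site set \<Rightarrow> (config \<Rightarrow> real) \<Rightarrow> bool" where
  "dep S f = (\<forall>s s'. (\<forall>x\<in>S. s x = s' x) \<longrightarrow> f s = f s')"

lemma finite_cfgs: "finite S \<Longrightarrow> finite (cfgs S)"
proof -
  assume "finite S"
  have "cfgs S \<subseteq> (\<lambda>A x. x \<in> A) ` Pow S"
  proof
    fix s assume "s \<in> cfgs S"
    then have "s = (\<lambda>x. x \<in> {x\<in>S. s x})" "{x\<in>S. s x} \<in> Pow S"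
      by (auto simp: cfgs_def fun_eq_iff)
    then show "s \<in> (\<lambda>A x. x \<in> A) ` Pow S" by blast
  qed
  then show ?thesis using \<open>finite S\<close> by (meson finite_Pow_iff finite_imageI finite_subset)
qed

lemma par_layer: "u \<in> par v \<Longrightarrow> layer u + 1 = layer v"
  by (auto simp: par_def dest: in_edges_props)

lemma par_le: "u \<in> par v \<Longrightarrow> fst u \<le> fst v \<and> snd u \<le> snd v"
  by (auto simp: par_def dest: in_edges_props)

lemma not_par_self: "v \<notin> par v"
  using par_layer by fastforce

lemma bf_upd: "w \<notin> par v \<Longrightarrow> bf \<theta> v (s(w := b)) = bf \<theta> v s"
  unfolding bf_def
  by (rule arg_cong[where f=sum_list], rule map_cong) (auto simp: zv_def par_def)

lemma mm_upd: "w \<notin> par v \<Longrightarrow> mm v (s(w := b)) = mm v s"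
  unfolding mm_def
  by (rule arg_cong[where f="\<lambda>x. x / real (indeg v)"], rule arg_cong[where f=sum_list], rule map_cong)
     (auto simp: zv_def par_def)

lemma pp_upd: "v \<noteq> w \<Longrightarrow> w \<notin> par v \<Longrightarrow> pp \<theta> v (s(w := b)) = pp \<theta> v s"
  by (simp add: pp_def bf_upd)

lemma pp_sum: "pp \<theta> w (s(w := True)) + pp \<theta> w (s(w := False)) = 1"
  by (simp add: pp_def bf_upd[OF not_par_self] rho_def)

lemma sin_bf: "sin (2 * bf \<theta> v s) = sin (2 * \<theta>) * mm v s"
proof -
  obtain a b where v: "v = (a, b)" by (cases v)
  consider "a = 0" "b = 0" | a' where "a = Suc a'" "b = 0" | b' where "a = 0" "b = Suc b'"
    | a' b' where "a = Suc a'" "b = Suc b'"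
    by (cases a; cases b) auto
  then show ?thesis
  proof cases
    case 1 then show ?thesis by (simp add: v bf_def mm_def in_edges_def)
  next
    case 2 then show ?thesis by (simp add: v bf_def mm_def in_edges_def indeg_def zv_def)
  next
    case 3 then show ?thesis by (simp add: v bf_def mm_def in_edges_def indeg_def zv_def)
  next
    case 4
    have "sin (2 * (\<theta> / 2 * x + \<theta> / 2 * y)) = sin (2 * \<theta>) * ((x + y) / 2)"
      if "x = 1 \<or> x = -1" "y = 1 \<or> y = -1" for x y :: real
      using that by (auto simp: algebra_simps)
    then show ?thesis using 4 by (simp add: v bf_def mm_def in_edges_def indeg_def zv_def)
  qed
qed

lemma pp_diff: "pp \<theta> w (s(w := False)) - pp \<theta> w (s(w := True)) = - sin (2 * \<theta>) * mm w s"
proof -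
  have "cos (x + pi/4) ^ 2 - sin (x + pi/4) ^ 2 = - sin (2 * x)" for x
  proof -
    have "cos (x + pi/4) ^ 2 - sin (x + pi/4) ^ 2 = cos (2 * (x + pi/4))" by (rule cos_double[symmetric])
    also have "\<dots> = cos (2 * x + pi/2)" by (simp add: algebra_simps)
    also have "\<dots> = - sin (2 * x)" by (simp add: cos_add)
    finally show ?thesis .
  qed
  then show ?thesis by (simp add: pp_def bf_upd[OF not_par_self] rho_def sin_bf)
qed

lemma WW_upd:
  assumes "w \<notin> S" "\<forall>v\<in>S. w \<notin> par v"
  shows "WW \<theta> S (s(w := b)) = WW \<theta> S s"
  unfolding WW_def by (rule prod.cong) (use assms in \<open>auto intro: pp_upd\<close>)

lemma cfgs_insert:
  assumes "w \<notin> S"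
  shows "cfgs (insert w S) = cfgs S \<union> (\<lambda>s. s(w := True)) ` cfgs S"
proof
  show "cfgs (insert w S) \<subseteq> cfgs S \<union> (\<lambda>s. s(w := True)) ` cfgs S"
  proof
    fix s assume s: "s \<in> cfgs (insert w S)"
    show "s \<in> cfgs S \<union> (\<lambda>s. s(w := True)) ` cfgs S"
    proof (cases "s w")
      case True
      then have "s = (s(w := False))(w := True)" by (auto simp: fun_eq_iff)
      moreover have "s(w := False) \<in> cfgs S" using s by (auto simp: cfgs_def)
      ultimately show ?thesis by blast
    next
      case False then show ?thesis using s by (auto simp: cfgs_def)
    qed
  qed
  show "cfgs S \<union> (\<lambda>s. s(w := True)) ` cfgs S \<subseteq> cfgs (insert w S)"
    by (auto simp: cfgs_def)
qed

lemma Ex_insert: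
  assumes fin: "finite S" and w: "w \<notin> S" "\<forall>v\<in>S. w \<notin> par v"
  shows "ExS \<theta> (insert w S) g = ExS \<theta> S (\<lambda>s. pp \<theta> w s * g s + pp \<theta> w (s(w := True)) * g (s(w := True)))"
proof -
  have wF: "\<not> s w" if "s \<in> cfgs S" for s using that w unfolding cfgs_def by blast
  have disj: "cfgs S \<inter> (\<lambda>s. s(w := True)) ` cfgs S = {}" using wF by (auto, metis fun_upd_same)
  have inj: "inj_on (\<lambda>s. s(w := True)) (cfgs S)"
  proof (rule inj_onI)
    fix s s' assume "s \<in> cfgs S" "s' \<in> cfgs S" "s(w := True) = s'(w := True)"
    note h = this
    show "s = s'"
    proof (rule ext)
      fix x show "s x = s' x"
      proof (cases "x = w")
        case True then show ?thesis using wF h by auto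
      next
        case False then show ?thesis using h(3) by (metis fun_upd_other)
      qed
    qed
  qed
  have Wi: "WW \<theta> (insert w S) s = pp \<theta> w s * WW \<theta> S s" for s
    using fin w by (simp add: WW_def)
  have "ExS \<theta> (insert w S) g = (\<Sum>s\<in>cfgs S. WW \<theta> (insert w S) s * g s) +
      (\<Sum>s\<in>(\<lambda>s. s(w := True)) ` cfgs S. WW \<theta> (insert w S) s * g s)"
    unfolding ExS_def cfgs_insert[OF w(1)]
    by (rule sum.union_disjoint) (auto simp: finite_cfgs fin disj)
  also have "(\<Sum>s\<in>(\<lambda>s. s(w := True)) ` cfgs S. WW \<theta> (insert w S) s * g s) =
      (\<Sum>s\<in>cfgs S. WW \<theta> (insert w S) (s(w := True)) * g (s(w := True)))"
    by (subst sum.reindex[OF inj]) simp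
  also have "(\<Sum>s\<in>cfgs S. WW \<theta> (insert w S) s * g s) +
      (\<Sum>s\<in>cfgs S. WW \<theta> (insert w S) (s(w := True)) * g (s(w := True))) =
      ExS \<theta> S (\<lambda>s. pp \<theta> w s * g s + pp \<theta> w (s(w := True)) * g (s(w := True)))"
    unfolding ExS_def sum.distrib[symmetric]
    by (rule sum.cong) (auto simp: Wi WW_upd[OF w] algebra_simps)
  finally show ?thesis .
qed

lemma Ex_insert_indep:
  assumes fin: "finite S" and w: "w \<notin> S" "\<forall>v\<in>S. w \<notin> par v"
    and f: "\<And>s b. f (s(w := b)) = f s"
  shows "ExS \<theta> (insert w S) f = ExS \<theta> S f"
proof -
  have "ExS \<theta> (insert w S) f = ExS \<theta> S (\<lambda>s. pp \<theta> w s * f s + pp \<theta> w (s(w := True)) * f (s(w := True)))"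
    by (rule Ex_insert[OF assms(1-3)])
  also have "\<dots> = ExS \<theta> S f"
    unfolding ExS_def
  proof (rule sum.cong)
    fix s assume s: "s \<in> cfgs S"
    then have "s = s(w := False)" using w by (auto simp: cfgs_def fun_eq_iff)
    then have "pp \<theta> w s + pp \<theta> w (s(w := True)) = 1" using pp_sum[of \<theta> w s] by (metis add.commute)
    moreover have "pp \<theta> w s * f s + pp \<theta> w (s(w := True)) * f (s(w := True)) = (pp \<theta> w s + pp \<theta> w (s(w := True))) * f s"
      by (simp add: f distrib_right)
    ultimately show "WW \<theta> S s * (pp \<theta> w s * f s + pp \<theta> w (s(w := True)) * f (s(w := True))) = WW \<theta> S s * f s"
      by simp
  qed simp
  finally show ?thesis .
qed

lemma Ex_insert_z:
  assumes fin: "finite S" and w: "w \<notin> S" "\<forall>v\<in>S. w \<notin> par v"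
    and f: "\<And>s b. f (s(w := b)) = f s"
  shows "ExS \<theta> (insert w S) (\<lambda>s. zv s w * f s) = ExS \<theta> S (\<lambda>s. - sin (2 * \<theta>) * mm w s * f s)"
proof -
  have "ExS \<theta> (insert w S) (\<lambda>s. zv s w * f s) = ExS \<theta> S (\<lambda>s. pp \<theta> w s * (zv s w * f s)
       + pp \<theta> w (s(w := True)) * (zv (s(w := True)) w * f (s(w := True))))"
    by (rule Ex_insert[OF assms(1-3)])
  also have "\<dots> = ExS \<theta> S (\<lambda>s. - sin (2 * \<theta>) * mm w s * f s)"
    unfolding ExS_def
  proof (rule sum.cong)
    fix s assume s: "s \<in> cfgs S"
    then have sw: "s = s(w := False)" using w by (auto simp: cfgs_def fun_eq_iff)
    then have "pp \<theta> w s - pp \<theta> w (s(w := True)) = - sin (2 * \<theta>) * mm w s"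
      using pp_diff[of \<theta> w s] by metis
    moreover have "zv s w = 1" using sw by (metis fun_upd_same zv_def)
    moreover have "zv (s(w := True)) w = -1" by (simp add: zv_def)
    moreover have "pp \<theta> w s * (1 * f s) + pp \<theta> w (s(w := True)) * (-1 * f s) = (pp \<theta> w s - pp \<theta> w (s(w := True))) * f s"
      by (simp add: left_diff_distrib)
    ultimately show "WW \<theta> S s * (pp \<theta> w s * (zv s w * f s) + pp \<theta> w (s(w := True)) * (zv (s(w := True)) w * f (s(w := True))))
        = WW \<theta> S s * (- sin (2 * \<theta>) * mm w s * f s)"
      by (simp add: f)
  qed simp
  finally show ?thesis .
qed


lemma Ex_cong: "(\<And>s. f s = g s) \<Longrightarrow> ExS \<theta> S f = ExS \<theta> S g"
  by (simp add: ExS_def)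

lemma cfgs_empty: "cfgs {} = {\<lambda>_. False}"
  by (auto simp: cfgs_def fun_eq_iff)

lemma Ex_empty: "ExS \<theta> {} f = f (\<lambda>_. False)"
  by (simp add: ExS_def cfgs_empty WW_def)

lemma WW_nonneg: "WW \<theta> S s \<ge> 0"
  by (simp add: WW_def pp_def prod_nonneg)

lemma Ex_cmult: "ExS \<theta> S (\<lambda>s. c * f s) = c * ExS \<theta> S f"
  by (simp add: ExS_def sum_distrib_left algebra_simps)

lemma Ex_add: "finite S \<Longrightarrow> ExS \<theta> S (\<lambda>s. f s + g s) = ExS \<theta> S f + ExS \<theta> S g"
  by (simp add: ExS_def sum.distrib algebra_simps)

lemma Ex_zero: "ExS \<theta> S (\<lambda>s. 0) = 0"
  by (simp add: ExS_def)

lemma Ex_sum_list: "finite S \<Longrightarrow>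
  ExS \<theta> S (\<lambda>s. sum_list (map (\<lambda>x. g x s) xs)) = sum_list (map (\<lambda>x. ExS \<theta> S (g x)) xs)"
proof (induction xs)
  case Nil then show ?case by (simp add: Ex_zero)
next
  case (Cons x xs)
  then show ?case using Ex_add[of S \<theta> "g x" "\<lambda>s. sum_list (map (\<lambda>x. g x s) xs)"] by simp
qed

lemma Ex_marg:
  assumes "finite S'" "dclosed S" "dclosed S'" "S \<subseteq> S'" "dep S f"
  shows "ExS \<theta> S' f = ExS \<theta> S f"
  using assms
proof (induction "card (S' - S)" arbitrary: S')
  case 0
  then have "S' = S" using finite_subset by auto
  then show ?case by simp
next
  case (Suc n)
  have fin: "finite (S' - S)" using Suc.prems by simp
  have ne: "S' - S \<noteq> {}" using Suc.hyps(2) by (intro notI) simp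
  define m where "m = Max (layer ` (S' - S))"
  have "m \<in> layer ` (S' - S)"
    using Max_in[of "layer ` (S' - S)"] fin ne unfolding m_def by blast
  then obtain w where w: "w \<in> S' - S" "layer w = m" by blast
  have wmax: "layer u \<le> m" if "u \<in> S' - S" for u
    unfolding m_def using fin that by auto
  have notpar: "w \<notin> par v" if "v \<in> S'" for v
  proof
    assume wp: "w \<in> par v"
    show False
    proof (cases "v \<in> S")
      case True
      then have "w \<in> S" using Suc.prems(2) wp by (auto simp: dclosed_def)
      then show False using w by auto
    next
      case False
      then have "layer v \<le> m" using wmax that by auto
      moreover have "layer w + 1 = layer v" using par_layer[OF wp] .
      ultimately show False using w by auto
    qed
  qed
  define S'' where "S'' = S' - {w}"
  have S'eq: "S' = insert w S''" using w unfolding S''_def by auto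
  have wS'': "w \<notin> S''" unfolding S''_def by simp
  have dc'': "dclosed S''"
    using Suc.prems(3) notpar unfolding dclosed_def S''_def by blast
  have sub'': "S \<subseteq> S''" using Suc.prems(4) w unfolding S''_def by auto
  have card'': "n = card (S'' - S)"
  proof -
    have "S'' - S = (S' - S) - {w}" unfolding S''_def by auto
    then show ?thesis using Suc.hyps(2) w fin by simp
  qed
  have fin'': "finite S''" using Suc.prems(1) unfolding S''_def by simp
  have f: "f (s(w := b)) = f s" for s b
    using Suc.prems(5) w unfolding dep_def by (metis DiffD2 fun_upd_other)
  have "ExS \<theta> S' f = ExS \<theta> (insert w S'') f" using S'eq by simp
  also have "\<dots> = ExS \<theta> S'' f"
    by (rule Ex_insert_indep[OF fin'' wS''], use notpar S''_def in auto, rule f)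
  also have "\<dots> = ExS \<theta> S f"
    by (rule Suc.hyps(1)[OF card'' fin'' Suc.prems(2) dc'' sub'' Suc.prems(5)])
  finally show ?case .
qed

lemma dclosed_empty: "dclosed {}" by (simp add: dclosed_def)

lemma Ex_one: "finite S \<Longrightarrow> dclosed S \<Longrightarrow> ExS \<theta> S (\<lambda>_. 1) = 1"
  using Ex_marg[of S "{}" "\<lambda>_. 1" \<theta>] by (simp add: dclosed_empty dep_def Ex_empty)

lemma Ex_abs:
  assumes "finite S" "dclosed S" "\<And>s. \<bar>f s\<bar> \<le> 1"
  shows "\<bar>ExS \<theta> S f\<bar> \<le> 1"
proof -
  have "\<bar>ExS \<theta> S f\<bar> \<le> (\<Sum>s\<in>cfgs S. \<bar>WW \<theta> S s * f s\<bar>)"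
    unfolding ExS_def by (rule sum_abs)
  also have "\<dots> \<le> (\<Sum>s\<in>cfgs S. WW \<theta> S s * 1)"
    by (rule sum_mono) (simp add: abs_mult WW_nonneg assms(3) mult_left_le)
  also have "\<dots> = 1" using Ex_one[OF assms(1,2), of \<theta>] by (simp add: ExS_def)
  finally show ?thesis .
qed

definition rect :: "site \<Rightarrow> site set" where
  "rect v = {0..fst v} \<times> {0..snd v}"

lemma finite_rect[simp]: "finite (rect v)" by (simp add: rect_def)

lemma in_rect: "u \<in> rect v \<longleftrightarrow> fst u \<le> fst v \<and> snd u \<le> snd v"
  by (cases u) (auto simp: rect_def)

lemma dclosed_rect: "dclosed (rect v)"
  unfolding dclosed_def by (force simp: in_rect dest: par_le)

lemma dclosed_Un: "dclosed A \<Longrightarrow> dclosed B \<Longrightarrow> dclosed (A \<union> B)"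
  by (auto simp: dclosed_def)

lemma rect_layer: "u \<in> rect v \<Longrightarrow> layer u \<le> layer v"
  by (auto simp: in_rect layer_def)

lemma rect_layer_eq: "u \<in> rect v \<Longrightarrow> layer u = layer v \<Longrightarrow> u = v"
  by (cases u; cases v) (auto simp: in_rect layer_def)

lemma rect_self: "v \<in> rect v" by (simp add: in_rect)

lemma rect_mono: "u \<in> rect v \<Longrightarrow> rect u \<subseteq> rect v"
  by (auto simp: in_rect)

definition Corr :: "real \<Rightarrow> site \<Rightarrow> site \<Rightarrow> real" where
  "Corr \<theta> p q = ExS \<theta> (rect p \<union> rect q) (\<lambda>s. zv s p * zv s q)"

lemma zv_sq: "zv s p * zv s p = 1" by (simp add: zv_def)

lemma zv_abs: "\<bar>zv s p\<bar> = 1" by (simp add: zv_def)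

lemma Corr_self: "Corr \<theta> p p = 1"
  unfolding Corr_def by (simp add: zv_sq Ex_one dclosed_rect)

lemma Corr_sym: "Corr \<theta> p q = Corr \<theta> q p"
  unfolding Corr_def by (simp add: Un_commute mult.commute)

lemma Corr_abs: "\<bar>Corr \<theta> p q\<bar> \<le> 1"
  unfolding Corr_def
  by (rule Ex_abs) (auto simp: dclosed_Un dclosed_rect abs_mult zv_abs)

lemma dep_zz: "p \<in> S \<Longrightarrow> q \<in> S \<Longrightarrow> dep S (\<lambda>s. zv s p * zv s q)"
  by (auto simp: dep_def zv_def)

lemma Corr_marg:
  assumes "finite S" "dclosed S" "rect p \<union> rect q \<subseteq> S"
  shows "ExS \<theta> S (\<lambda>s. zv s p * zv s q) = Corr \<theta> p q"
  unfolding Corr_def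
  by (rule Ex_marg) (use assms rect_self[of p] rect_self[of q] in \<open>auto simp: dclosed_Un dclosed_rect intro!: dep_zz\<close>)

lemma dclosed_lattice: "dclosed (lattice L)"
  unfolding dclosed_def lattice_def by (force dest: par_le)

lemma whip_ZZ_Corr:
  assumes "p \<in> lattice L" "q \<in> lattice L"
  shows "whip_ZZ L \<theta> p q = complex_of_real (Corr \<theta> p q)"
proof -
  define P where "P s = (\<Prod>v\<in>lattice L. rho (bf \<theta> v s) (s v))" for s
  have cf: "configs L = cfgs (lattice L)" by (simp add: configs_def cfgs_def)
  have "whip_ZZ L \<theta> p q = (\<Sum>s\<in>configs L. complex_of_real (WW \<theta> (lattice L) s * (zv s p * zv s q)))"
    unfolding whip_ZZ_def expval_def
  proof (rule sum.cong)
    fix s assume "s \<in> configs L"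
    moreover have "P s ^ 2 = WW \<theta> (lattice L) s"
      by (simp add: P_def WW_def pp_def prod_power_distrib)
    ultimately show "cnj (whip_state L \<theta> s) * pauliZ p (pauliZ q (whip_state L \<theta>)) s =
        complex_of_real (WW \<theta> (lattice L) s * (zv s p * zv s q))"
      by (simp add: whip_state_prod pauliZ_def P_def[symmetric] zv_def power2_eq_square) (metis of_real_mult)
  qed simp
  also have "\<dots> = complex_of_real (ExS \<theta> (lattice L) (\<lambda>s. zv s p * zv s q))"
    by (simp add: ExS_def cf)
  also have "ExS \<theta> (lattice L) (\<lambda>s. zv s p * zv s q) = Corr \<theta> p q"
  proof (rule Corr_marg)
    show "rect p \<union> rect q \<subseteq> lattice L"
      using assms by (auto simp: in_rect lattice_def)
  qed (auto simp: dclosed_lattice)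
  finally show ?thesis .
qed


lemma par_in_edges: "e \<in> set (in_edges v) \<Longrightarrow> fst e \<in> par v"
  by (simp add: par_def)

lemma mm_expand:
  "mm v s = sum_list (map (\<lambda>e. zv s (fst e)) (in_edges v)) / real (indeg v)"
  by (simp add: mm_def)

lemma sum_list_mult_right: "sum_list (map f xs) * (c::real) = sum_list (map (\<lambda>x. f x * c) xs)"
  by (induction xs) (auto simp: algebra_simps)

lemma sum_list_mult_left: "(c::real) * sum_list (map f xs) = sum_list (map (\<lambda>x. c * f x) xs)"
  by (induction xs) (auto simp: algebra_simps)

lemma Corr_rec:
  assumes pq: "p \<noteq> q" "layer p = layer q" "layer p \<ge> 1"
  shows "Corr \<theta> p q = (sin (2 * \<theta>))\<^sup>2 / (real (indeg p) * real (indeg q)) *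
     sum_list (map (\<lambda>e. sum_list (map (\<lambda>e'. Corr \<theta> (fst e) (fst e')) (in_edges q))) (in_edges p))"
proof -
  define S where "S = rect p \<union> rect q"
  define n where "n = layer p"
  have lay: "layer u \<le> n" if "u \<in> S" for u
    using that rect_layer[of u p] rect_layer[of u q] pq unfolding S_def n_def by auto
  have layeq: "u = p \<or> u = q" if "u \<in> S" "layer u = n" for u
    using that rect_layer_eq[of u p] rect_layer_eq[of u q] pq unfolding S_def n_def by auto
  define S1 where "S1 = S - {p}"
  define S2 where "S2 = S1 - {q}"
  have finS: "finite S" "finite S1" "finite S2" unfolding S_def S1_def S2_def by auto
  have dcS: "dclosed S" unfolding S_def by (simp add: dclosed_Un dclosed_rect)
  have notparS: "u \<notin> par v" if "v \<in> S" "layer u = n" for u v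
    using par_layer[of u v] lay[OF that(1)] that(2) by auto
  have Seq: "S = insert p S1" unfolding S1_def S_def using rect_self[of p] by auto
  have S1eq: "S1 = insert q S2" unfolding S1_def S2_def S_def using rect_self[of q] pq by auto
  have pS1: "p \<notin> S1" unfolding S1_def by simp
  have qS2: "q \<notin> S2" unfolding S2_def by simp
  have np1: "\<forall>v\<in>S1. p \<notin> par v" using notparS n_def unfolding S1_def by auto
  have nq2: "\<forall>v\<in>S2. q \<notin> par v" using notparS n_def pq unfolding S2_def S1_def by auto
  have dcS2: "dclosed S2"
    unfolding dclosed_def
  proof (intro ballI subsetI)
    fix v u assume v: "v \<in> S2" and u: "u \<in> par v"
    then have "u \<in> S" using dcS unfolding dclosed_def S2_def S1_def by auto
    moreover have "layer u < n" using par_layer[OF u] lay[of v] v unfolding S2_def S1_def by auto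
    ultimately show "u \<in> S2" unfolding S2_def S1_def n_def using pq by auto
  qed
  have qp: "q \<notin> par p" using notparS[of p q] rect_self[of p] pq unfolding S_def n_def by auto
  have "Corr \<theta> p q = ExS \<theta> (insert p S1) (\<lambda>s. zv s p * zv s q)"
    unfolding Corr_def S_def[symmetric] Seq ..
  also have "\<dots> = ExS \<theta> S1 (\<lambda>s. - sin (2 * \<theta>) * mm p s * zv s q)"
    by (rule Ex_insert_z[OF finS(2) pS1 np1]) (use pq in \<open>simp add: zv_def\<close>)
  also have "\<dots> = ExS \<theta> (insert q S2) (\<lambda>s. zv s q * (- sin (2 * \<theta>) * mm p s))"
    unfolding S1eq by (rule Ex_cong) simp
  also have "\<dots> = ExS \<theta> S2 (\<lambda>s. - sin (2 * \<theta>) * mm q s * (- sin (2 * \<theta>) * mm p s))"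
    by (rule Ex_insert_z[OF finS(3) qS2 nq2]) (simp add: mm_upd[OF qp])
  also have "\<dots> = ExS \<theta> S2 (\<lambda>s. (sin (2 * \<theta>))\<^sup>2 / (real (indeg p) * real (indeg q)) *
      sum_list (map (\<lambda>e. sum_list (map (\<lambda>e'. zv s (fst e) * zv s (fst e')) (in_edges q))) (in_edges p)))"
  proof (rule Ex_cong)
    fix s
    show "- sin (2 * \<theta>) * mm q s * (- sin (2 * \<theta>) * mm p s) = (sin (2 * \<theta>))\<^sup>2 / (real (indeg p) * real (indeg q)) *
      sum_list (map (\<lambda>e. sum_list (map (\<lambda>e'. zv s (fst e) * zv s (fst e')) (in_edges q))) (in_edges p))"
    proof -
      have h: "sum_list (map (\<lambda>e. sum_list (map (\<lambda>e'. zv s (fst e) * zv s (fst e')) (in_edges q))) (in_edges p))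
        = sum_list (map (\<lambda>e. zv s (fst e)) (in_edges p)) * sum_list (map (\<lambda>e'. zv s (fst e')) (in_edges q))"
        by (subst sum_list_mult_right) (simp only: sum_list_mult_left)
      show ?thesis unfolding mm_def h by (simp add: power2_eq_square mult_ac)
    qed
  qed
  also have "\<dots> = (sin (2 * \<theta>))\<^sup>2 / (real (indeg p) * real (indeg q)) *
      sum_list (map (\<lambda>e. sum_list (map (\<lambda>e'. ExS \<theta> S2 (\<lambda>s. zv s (fst e) * zv s (fst e'))) (in_edges q))) (in_edges p))"
    by (subst Ex_cmult) (simp only: Ex_sum_list[OF finS(3)])
  also have "\<dots> = (sin (2 * \<theta>))\<^sup>2 / (real (indeg p) * real (indeg q)) *
      sum_list (map (\<lambda>e. sum_list (map (\<lambda>e'. Corr \<theta> (fst e) (fst e')) (in_edges q))) (in_edges p))"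
  proof -
    have "ExS \<theta> S2 (\<lambda>s. zv s (fst e) * zv s (fst e')) = Corr \<theta> (fst e) (fst e')"
      if e: "e \<in> set (in_edges p)" and e': "e' \<in> set (in_edges q)" for e e'
    proof (rule Corr_marg[OF finS(3) dcS2])
      have pe: "fst e \<in> par p" "fst e' \<in> par q" using e e' by (auto simp: par_in_edges)
      have "rect (fst e) \<subseteq> rect p" "rect (fst e') \<subseteq> rect q"
        using par_le[OF pe(1)] par_le[OF pe(2)] by (auto simp: in_rect)
      moreover have "layer u < n" if "u \<in> rect (fst e) \<union> rect (fst e')" for u
        using that rect_layer[of u "fst e"] rect_layer[of u "fst e'"] par_layer[OF pe(1)] par_layer[OF pe(2)] pq unfolding n_def by auto
      ultimately show "rect (fst e) \<union> rect (fst e') \<subseteq> S2"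
      proof (intro subsetI)
        fix u assume u: "u \<in> rect (fst e) \<union> rect (fst e')"
        assume sub: "rect (fst e) \<subseteq> rect p" "rect (fst e') \<subseteq> rect q"
          and lt: "\<And>u. u \<in> rect (fst e) \<union> rect (fst e') \<Longrightarrow> layer u < n"
        have "u \<noteq> p" "u \<noteq> q" using lt[OF u] pq unfolding n_def by auto
        moreover have "u \<in> S" using u sub unfolding S_def by auto
        ultimately show "u \<in> S2" unfolding S2_def S1_def by auto
      qed
    qed
    then show ?thesis
      by (intro arg_cong[where f="\<lambda>x. _ * x"] arg_cong[where f=sum_list] map_cong refl) auto
  qed
  finally show ?thesis .
qed

lemma Corr_child:
  assumes i: "i \<in> par j"
  shows "Corr \<theta> i j = - sin (2 * \<theta>) / real (indeg j) * sum_list (map (\<lambda>e. Corr \<theta> i (fst e)) (in_edges j))"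
proof -
  have ij: "i \<noteq> j" using i not_par_self[of j] by auto
  have ri: "rect i \<subseteq> rect j" using par_le[OF i] by (auto simp: in_rect)
  define S1 where "S1 = rect j - {j}"
  have fin: "finite S1" unfolding S1_def by simp
  have eq: "rect i \<union> rect j = insert j S1" using ri rect_self[of j] unfolding S1_def by auto
  have lt: "layer u < layer j" if "u \<in> S1" for u
    using that rect_layer[of u j] rect_layer_eq[of u j] unfolding S1_def by fastforce
  have nj: "\<forall>v\<in>S1. j \<notin> par v" using lt par_layer by fastforce
  have dc1: "dclosed S1"
    unfolding dclosed_def
  proof (intro ballI subsetI)
    fix v u assume v: "v \<in> S1" and u: "u \<in> par v"
    then have "u \<in> rect j" using dclosed_rect[of j] unfolding dclosed_def S1_def by auto
    moreover have "u \<noteq> j" using par_layer[OF u] lt[OF v] by auto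
    ultimately show "u \<in> S1" unfolding S1_def by auto
  qed
  have "Corr \<theta> i j = ExS \<theta> (insert j S1) (\<lambda>s. zv s j * zv s i)"
    unfolding Corr_def eq by (simp add: mult.commute)
  also have "\<dots> = ExS \<theta> S1 (\<lambda>s. - sin (2 * \<theta>) * mm j s * zv s i)"
    by (rule Ex_insert_z[OF fin _ nj]) (use ij in \<open>simp_all add: zv_def S1_def\<close>)
  also have "\<dots> = ExS \<theta> S1 (\<lambda>s. - sin (2 * \<theta>) / real (indeg j) * sum_list (map (\<lambda>e. zv s i * zv s (fst e)) (in_edges j)))"
  proof (rule Ex_cong)
    fix s
    have h: "sum_list (map (\<lambda>e. zv s i * zv s (fst e)) (in_edges j)) = zv s i * sum_list (map (\<lambda>e. zv s (fst e)) (in_edges j))"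
      by (simp add: sum_list_mult_left)
    show "- sin (2 * \<theta>) * mm j s * zv s i = - sin (2 * \<theta>) / real (indeg j) * sum_list (map (\<lambda>e. zv s i * zv s (fst e)) (in_edges j))"
      unfolding mm_def h by simp
  qed
  also have "\<dots> = - sin (2 * \<theta>) / real (indeg j) * sum_list (map (\<lambda>e. ExS \<theta> S1 (\<lambda>s. zv s i * zv s (fst e))) (in_edges j))"
    by (subst Ex_cmult, subst Ex_sum_list[OF fin], rule refl)
  also have "\<dots> = - sin (2 * \<theta>) / real (indeg j) * sum_list (map (\<lambda>e. Corr \<theta> i (fst e)) (in_edges j))"
  proof -
    have "ExS \<theta> S1 (\<lambda>s. zv s i * zv s (fst e)) = Corr \<theta> i (fst e)" if e: "e \<in> set (in_edges j)" for e
    proof (rule Corr_marg[OF fin dc1])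
      have pe: "fst e \<in> par j" using e by (simp add: par_in_edges)
      have "rect (fst e) \<subseteq> rect j" using par_le[OF pe] by (auto simp: in_rect)
      moreover have "layer u < layer j" if "u \<in> rect i \<union> rect (fst e)" for u
        using that rect_layer[of u i] rect_layer[of u "fst e"] par_layer[OF pe] par_layer[OF i] by auto
      ultimately show "rect i \<union> rect (fst e) \<subseteq> S1"
        using ri unfolding S1_def by auto
    qed
    then show ?thesis
      by (intro arg_cong[where f="\<lambda>x. _ * x"] arg_cong[where f=sum_list] map_cong refl) auto
  qed
  finally show ?thesis .
qed


definition cc :: "real \<Rightarrow> real" where "cc \<theta> = \<bar>cos (2 * \<theta>)\<bar>"
definition xx :: "real \<Rightarrow> real" where "xx \<theta> = (1 - cc \<theta>) / (1 + cc \<theta>)"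

lemma cc_ge: "0 \<le> cc \<theta>" and cc_le: "cc \<theta> \<le> 1"
  by (auto simp: cc_def abs_cos_le_one)

lemma cc_sq: "(cc \<theta>)\<^sup>2 = 1 - (sin (2 * \<theta>))\<^sup>2"
  by (simp add: cc_def power2_abs sin_squared_eq)

lemma xx_ge: "0 \<le> xx \<theta>" and xx_le: "xx \<theta> \<le> 1"
  using cc_ge[of \<theta>] cc_le[of \<theta>] by (auto simp: xx_def divide_simps)

lemma xx_aux: "(c::real) \<ge> 0 \<Longrightarrow> (1 - c\<^sup>2) / 4 * (1 + (1 - c) / (1 + c))\<^sup>2 = (1 - c) / (1 + c)"
proof -
  assume c: "c \<ge> 0"
  have h: "1 + (1 - c) / (1 + c) = 2 / (1 + c)" using c by (simp add: field_simps)
  have h2: "(2 / (1 + c))\<^sup>2 = 4 / (1 + c)\<^sup>2" by (simp add: power_divide)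
  have "(1 - c\<^sup>2) / 4 * (1 + (1 - c) / (1 + c))\<^sup>2 = (1 - c\<^sup>2) / (1 + c)\<^sup>2"
    unfolding h h2 using c by (simp add: divide_simps add_pos_nonneg)
  also have "\<dots> = ((1 - c) * (1 + c)) / ((1 + c) * (1 + c))" by (simp add: power2_eq_square algebra_simps)
  also have "\<dots> = (1 - c) / (1 + c)" using c by simp
  finally show ?thesis .
qed

lemma xx_id: "(sin (2 * \<theta>))\<^sup>2 / 4 * (1 + xx \<theta>)\<^sup>2 = xx \<theta>"
proof -
  have s: "(sin (2 * \<theta>))\<^sup>2 = 1 - (cc \<theta>)\<^sup>2" using cc_sq[of \<theta>] by simp
  show ?thesis unfolding xx_def s by (rule xx_aux[OF cc_ge])
qed

lemma length_in_edges: "length (in_edges v) = indeg v"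
  by (cases v) (auto simp: in_edges_def indeg_def)

lemma indeg_pos: "layer v \<ge> 1 \<Longrightarrow> indeg v \<ge> 1"
  by (cases v) (auto simp: indeg_def layer_def)

lemma sum_list_const: "sum_list (map (\<lambda>_. c) xs) = real (length xs) * (c::real)"
  by (induction xs) (auto simp: algebra_simps)

lemma Corr_one:
  assumes r: "(sin (2 * \<theta>))\<^sup>2 = 1"
  shows "layer p = layer q \<Longrightarrow> Corr \<theta> p q = 1"
proof (induction "layer p" arbitrary: p q)
  case 0
  then have "p = (0, 0)" "q = (0, 0)" by (cases p; cases q; auto simp: layer_def)+
  then show ?case by (simp add: Corr_self)
next
  case (Suc n)
  show ?case
  proof (cases "p = q")
    case True then show ?thesis by (simp add: Corr_self)
  next
    case False
    have all1: "sum_list (map (\<lambda>e. sum_list (map (\<lambda>e'. Corr \<theta> (fst e) (fst e')) (in_edges q))) (in_edges p))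
        = sum_list (map (\<lambda>e. sum_list (map (\<lambda>e'. 1) (in_edges q))) (in_edges p))"
    proof (intro arg_cong[where f=sum_list] map_cong refl)
      fix e e' assume e: "e \<in> set (in_edges p)" and e': "e' \<in> set (in_edges q)"
      have "layer (fst e) = n" "layer (fst e') = n"
        using par_layer[OF par_in_edges[OF e]] par_layer[OF par_in_edges[OF e']] Suc.hyps(2) Suc.prems by auto
      then show "Corr \<theta> (fst e) (fst e') = 1" using Suc.hyps(1) by metis
    qed
    have "indeg p \<ge> 1" "indeg q \<ge> 1" using indeg_pos Suc.hyps(2) Suc.prems by (metis le_add1 plus_1_eq_Suc)+
    then show ?thesis
      using Corr_rec[of p q \<theta>] False Suc.hyps(2) Suc.prems r all1
      by (simp add: sum_list_const length_in_edges)
  qed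
qed

definition FF :: "real \<Rightarrow> nat \<Rightarrow> nat \<Rightarrow> nat \<Rightarrow> real" where
  "FF \<theta> a m d = Corr \<theta> (a, m + d) (a + d, m)"

lemma FF_rec:
  "FF \<theta> (Suc a) (Suc m) (Suc d) = (sin (2 * \<theta>))\<^sup>2 / 4 *
     (FF \<theta> a (Suc m) (Suc d) + FF \<theta> a m (Suc (Suc d)) + FF \<theta> (Suc a) (Suc m) d + FF \<theta> (Suc a) m (Suc d))"
proof -
  have "Corr \<theta> (Suc a, Suc m + Suc d) (Suc a + Suc d, Suc m) = (sin (2 * \<theta>))\<^sup>2 / (real (indeg (Suc a, Suc m + Suc d)) * real (indeg (Suc a + Suc d, Suc m))) *
     sum_list (map (\<lambda>e. sum_list (map (\<lambda>e'. Corr \<theta> (fst e) (fst e')) (in_edges (Suc a + Suc d, Suc m)))) (in_edges (Suc a, Suc m + Suc d)))"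
    by (rule Corr_rec) (auto simp: layer_def)
  then show ?thesis
    by (simp add: FF_def in_edges_def indeg_def algebra_simps)
qed

lemma FF_zero: "FF \<theta> a m 0 = 1"
  by (simp add: FF_def Corr_self)

lemma FF_abs: "\<bar>FF \<theta> a m d\<bar> \<le> 1"
  by (simp add: FF_def Corr_abs)

lemma abs4: "\<bar>a + b + c + d\<bar> \<le> \<bar>a\<bar> + \<bar>b\<bar> + \<bar>c\<bar> + \<bar>(d::real)\<bar>"
  by arith

lemma FF_err:
  "d \<ge> 1 \<Longrightarrow> k \<le> a \<Longrightarrow> k \<le> m \<Longrightarrow> \<bar>FF \<theta> a m d - xx \<theta> ^ d\<bar> \<le> 2 * ((sin (2 * \<theta>))\<^sup>2) ^ k"
proof (induction k arbitrary: a m d)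
  case 0
  have "\<bar>FF \<theta> a m d - xx \<theta> ^ d\<bar> \<le> \<bar>FF \<theta> a m d\<bar> + \<bar>xx \<theta> ^ d\<bar>" by (rule abs_triangle_ineq4)
  also have "\<dots> \<le> 1 + 1"
    using FF_abs[of \<theta> a m d] xx_ge[of \<theta>] xx_le[of \<theta>] by (intro add_mono) (auto simp: power_le_one)
  finally show ?case by simp
next
  case (Suc k)
  obtain a0 m0 d0 where am: "a = Suc a0" "m = Suc m0" "d = Suc d0"
    using Suc.prems by (metis Suc_le_D not0_implies_Suc not_one_le_zero)
  define r where "r = (sin (2 * \<theta>))\<^sup>2"
  define x where "x = xx \<theta>"
  have r0: "0 \<le> r" unfolding r_def by simp
  have e1: "\<bar>FF \<theta> a0 (Suc m0) (Suc d0) - x ^ Suc d0\<bar> \<le> 2 * r ^ k"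
    using Suc.IH[of "Suc d0" a0 "Suc m0"] Suc.prems am unfolding r_def x_def by simp
  have e2: "\<bar>FF \<theta> a0 m0 (Suc (Suc d0)) - x ^ Suc (Suc d0)\<bar> \<le> 2 * r ^ k"
    using Suc.IH[of "Suc (Suc d0)" a0 m0] Suc.prems am unfolding r_def x_def by simp
  have e3: "\<bar>FF \<theta> (Suc a0) (Suc m0) d0 - x ^ d0\<bar> \<le> 2 * r ^ k"
  proof (cases "d0 = 0")
    case True then show ?thesis using r0 by (simp add: FF_zero)
  next
    case False then show ?thesis
      using Suc.IH[of d0 "Suc a0" "Suc m0"] Suc.prems am unfolding r_def x_def by simp
  qed
  have e4: "\<bar>FF \<theta> (Suc a0) m0 (Suc d0) - x ^ Suc d0\<bar> \<le> 2 * r ^ k"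
    using Suc.IH[of "Suc d0" "Suc a0" m0] Suc.prems am unfolding r_def x_def by simp
  have id: "r / 4 * (x ^ Suc d0 + x ^ Suc (Suc d0) + x ^ d0 + x ^ Suc d0) = x ^ Suc d0"
  proof -
    have "r / 4 * (x ^ Suc d0 + x ^ Suc (Suc d0) + x ^ d0 + x ^ Suc d0) = x ^ d0 * (r / 4 * (1 + x)\<^sup>2)"
      by (simp add: power2_eq_square algebra_simps)
    also have "r / 4 * (1 + x)\<^sup>2 = x" unfolding r_def x_def by (rule xx_id)
    finally show ?thesis by simp
  qed
  have "FF \<theta> a m d - x ^ d = r / 4 * ((FF \<theta> a0 (Suc m0) (Suc d0) - x ^ Suc d0) + (FF \<theta> a0 m0 (Suc (Suc d0)) - x ^ Suc (Suc d0))
      + (FF \<theta> (Suc a0) (Suc m0) d0 - x ^ d0) + (FF \<theta> (Suc a0) m0 (Suc d0) - x ^ Suc d0))"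
    using id unfolding am FF_rec r_def[symmetric] by (simp add: algebra_simps)
  also have "\<bar>\<dots>\<bar> \<le> r / 4 * (8 * r ^ k)"
    unfolding abs_mult using r0
    by (intro mult_mono) (use e1 e2 e3 e4 abs4 in \<open>force+\<close>)
  also have "\<dots> = 2 * r ^ Suc k" by (simp add: algebra_simps)
  finally show ?case unfolding r_def x_def .
qed


definition L0 :: "real \<Rightarrow> real" where "L0 \<theta> = - sin (2 * \<theta>) / 2 * (1 + xx \<theta>)"

lemma whip_limit_eq: "whip_limit \<theta> = L0 \<theta>"
proof -
  define s where "s = sin (2 * \<theta>)"
  define c where "c = cc \<theta>"
  have c0: "c \<ge> 0" unfolding c_def by (rule cc_ge)
  have cs: "c\<^sup>2 = 1 - s\<^sup>2" unfolding c_def s_def by (rule cc_sq)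
  have L: "L0 \<theta> = - s / (1 + c)"
  proof -
    have "1 + xx \<theta> = 2 / (1 + c)" using c0 unfolding xx_def c_def[symmetric] by (simp add: field_simps)
    then show ?thesis unfolding L0_def s_def[symmetric] by simp
  qed
  show ?thesis
  proof (cases "s = 0")
    case True then show ?thesis by (simp add: whip_limit_def L s_def[symmetric])
  next
    case False
    have "(c - 1) * (1 + c) = - s * s" using cs by (simp add: power2_eq_square algebra_simps)
    then have "(c - 1) / s = - s / (1 + c)" using False c0 by (simp add: field_simps)
    then show ?thesis using False by (simp add: whip_limit_def L s_def[symmetric] c_def cc_def)
  qed
qed

lemma L0_abs: "\<bar>L0 \<theta>\<bar> \<le> 1"
proof -
  have "\<bar>sin (2 * \<theta>)\<bar> \<le> 1" by (rule abs_sin_le_one)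
  moreover have "0 \<le> 1 + xx \<theta>" "1 + xx \<theta> \<le> 2" using xx_ge[of \<theta>] xx_le[of \<theta>] by auto
  ultimately have "\<bar>sin (2 * \<theta>)\<bar> * (1 + xx \<theta>) \<le> 1 * 2" by (intro mult_mono) auto
  then show ?thesis using xx_ge[of \<theta>] by (simp add: L0_def abs_mult)
qed

lemma r_le1: "(sin (2 * (\<theta>::real)))\<^sup>2 \<le> 1"
  using abs_sin_le_one[of "2 * \<theta>"] by (simp add: abs_square_le_1)

lemma pair_child_err:
  assumes "k \<le> a" "k \<le> m" "Corr \<theta> i j = - sin (2 * \<theta>) / 2 * (1 + FF \<theta> a m 1)" "k' \<le> k"
  shows "\<bar>Corr \<theta> i j - L0 \<theta>\<bar> \<le> 2 * ((sin (2 * \<theta>))\<^sup>2) ^ k'"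
proof -
  define r where "r = (sin (2 * \<theta>))\<^sup>2"
  have e: "\<bar>FF \<theta> a m 1 - xx \<theta>\<bar> \<le> 2 * r ^ k" using FF_err[of 1 k a m \<theta>] assms unfolding r_def by simp
  have "Corr \<theta> i j - L0 \<theta> = - sin (2 * \<theta>) / 2 * (FF \<theta> a m 1 - xx \<theta>)"
    using assms(3) by (simp add: L0_def field_simps)
  then have "\<bar>Corr \<theta> i j - L0 \<theta>\<bar> = \<bar>sin (2 * \<theta>)\<bar> / 2 * \<bar>FF \<theta> a m 1 - xx \<theta>\<bar>"
    by (simp add: abs_mult)
  also have "\<dots> \<le> 1 / 2 * (2 * r ^ k)"
    using e abs_sin_le_one[of "2 * \<theta>"] by (intro mult_mono) auto
  also have "\<dots> \<le> 2 * r ^ k'"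
  proof -
    have "r ^ k \<le> r ^ k'" using r_le1[of \<theta>] assms(4) unfolding r_def by (intro power_decreasing) auto
    moreover have "0 \<le> r ^ k" unfolding r_def by simp
    ultimately show ?thesis by simp
  qed
  finally show ?thesis unfolding r_def .
qed

lemma pair_err:
  assumes j: "j = (a + 1, b) \<or> j = (a, b + 1)"
  shows "\<bar>Corr \<theta> (a, b) j - L0 \<theta>\<bar> \<le> 2 * ((sin (2 * \<theta>))\<^sup>2) ^ (min a b - 1)"
proof (cases "min a b = 0")
  case True
  have "\<bar>Corr \<theta> (a, b) j - L0 \<theta>\<bar> \<le> \<bar>Corr \<theta> (a, b) j\<bar> + \<bar>L0 \<theta>\<bar>" by (rule abs_triangle_ineq4)
  also have "\<dots> \<le> 2" using Corr_abs[of \<theta> "(a, b)" j] L0_abs[of \<theta>] by simp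
  finally show ?thesis using True by simp
next
  case False
  then obtain a0 b0 where ab: "a = Suc a0" "b = Suc b0" by (metis min_0L min_0R not0_implies_Suc)
  have mn: "min a b - 1 = min a0 b0" using ab by simp
  from j show ?thesis
  proof
    assume j1: "j = (a + 1, b)"
    have "(a, b) \<in> par j" unfolding j1 ab by (simp add: par_def in_edges_def)
    from Corr_child[OF this, of \<theta>]
    have h: "Corr \<theta> (a, b) j = - sin (2 * \<theta>) / 2 * (1 + FF \<theta> (Suc a0) b0 1)"
      unfolding j1 ab by (simp add: in_edges_def indeg_def Corr_self FF_def)
    show ?thesis unfolding mn by (rule pair_child_err[where k="min (Suc a0) b0", OF _ _ h]) auto
  next
    assume j2: "j = (a, b + 1)"
    have "(a, b) \<in> par j" unfolding j2 ab by (simp add: par_def in_edges_def)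
    from Corr_child[OF this, of \<theta>]
    have h: "Corr \<theta> (a, b) j = - sin (2 * \<theta>) / 2 * (1 + FF \<theta> a0 (Suc b0) 1)"
      unfolding j2 ab by (simp add: in_edges_def indeg_def Corr_self FF_def Corr_sym[of \<theta> "(Suc a0, Suc b0)"] algebra_simps)
    show ?thesis unfolding mn by (rule pair_child_err[where k="min a0 (Suc b0)", OF _ _ h]) auto
  qed
qed

lemma pair_exact:
  assumes r: "(sin (2 * \<theta>))\<^sup>2 = 1" and i: "i \<in> par j"
  shows "Corr \<theta> i j = L0 \<theta>"
proof -
  have "cc \<theta> = 0" using cc_sq[of \<theta>] r cc_ge[of \<theta>] by simp
  then have L: "L0 \<theta> = - sin (2 * \<theta>)" by (simp add: L0_def xx_def)
  have ones: "sum_list (map (\<lambda>e. Corr \<theta> i (fst e)) (in_edges j)) = sum_list (map (\<lambda>e. 1) (in_edges j))"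
  proof (intro arg_cong[where f=sum_list] map_cong refl)
    fix e assume "e \<in> set (in_edges j)"
    then have "layer (fst e) = layer i" using par_layer[OF par_in_edges] par_layer[OF i] by (metis add_right_cancel)
    then show "Corr \<theta> i (fst e) = 1" using Corr_one[OF r] by metis
  qed
  have "indeg j \<ge> 1" using indeg_pos par_layer[OF i] by (metis le_add2)
  then show ?thesis
    using Corr_child[OF i, of \<theta>] unfolding ones L by (simp add: sum_list_const length_in_edges)
qed


lemma filterlim_minus1:
  assumes "filterlim f at_top F"
  shows "filterlim (\<lambda>x. f x - (1::nat)) at_top F"
  unfolding filterlim_at_top
proof
  fix Z :: nat
  have "eventually (\<lambda>x. Z + 1 \<le> f x) F" using assms unfolding filterlim_at_top by blast
  then show "eventually (\<lambda>x. Z \<le> f x - 1) F" by (rule eventually_mono) auto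
qed

lemma pow_to_zero:
  assumes "0 \<le> r" "r < (1::real)" "filterlim f at_top F"
  shows "((\<lambda>x. 2 * r ^ f x) \<longlongrightarrow> 0) F"
proof -
  have "((\<lambda>n. r ^ n) \<longlongrightarrow> 0) sequentially" using assms by (intro LIMSEQ_power_zero) simp
  then have "((\<lambda>x. r ^ f x) \<longlongrightarrow> 0) F" using filterlim_compose assms(3) by blast
  then show ?thesis using tendsto_mult_right_zero by blast
qed

lemma par_child1: "(a, b) \<in> par (a + 1, b)"
  by (simp add: par_def in_edges_def image_iff)

lemma par_child2: "(a, b) \<in> par (a, b + 1)"
  by (simp add: par_def in_edges_def image_iff)

lemma par_child: "j = (a + 1, b) \<or> j = (a, b + 1) \<Longrightarrow> (a, b) \<in> par j"
  using par_child1 par_child2 by auto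

lemma part1:
  fixes a b :: "nat \<Rightarrow> nat" and j :: "nat \<Rightarrow> site" and \<theta> :: real
  assumes j_nb: "\<forall>L\<ge>2. j L = (a L + 1, b L) \<or> j L = (a L, b L + 1)"
    and j_in: "\<forall>L\<ge>2. j L \<in> lattice L"
    and min_inf: "filterlim (\<lambda>L. min (a L) (b L)) at_top sequentially"
  shows "(\<lambda>L. whip_ZZ L \<theta> (a L, b L) (j L)) \<longlonglongrightarrow> complex_of_real (whip_limit \<theta>)"
proof -
  have ev: "eventually (\<lambda>L. complex_of_real (Corr \<theta> (a L, b L) (j L)) = whip_ZZ L \<theta> (a L, b L) (j L)) sequentially"
    unfolding eventually_sequentially
  proof (intro exI allI impI)
    fix L :: nat assume L: "2 \<le> L"
    have "j L = (a L + 1, b L) \<or> j L = (a L, b L + 1)" "j L \<in> lattice L" using j_nb j_in L by auto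
    then have "(a L, b L) \<in> lattice L" by (auto simp: lattice_def)
    then show "complex_of_real (Corr \<theta> (a L, b L) (j L)) = whip_ZZ L \<theta> (a L, b L) (j L)"
      using whip_ZZ_Corr j_in L by metis
  qed
  have par: "(a L, b L) \<in> par (j L)" if "L \<ge> 2" for L
    using j_nb that by (intro par_child) auto
  have real: "(\<lambda>L. Corr \<theta> (a L, b L) (j L)) \<longlonglongrightarrow> L0 \<theta>"
  proof (cases "(sin (2 * \<theta>))\<^sup>2 = 1")
    case True
    have "eventually (\<lambda>L. Corr \<theta> (a L, b L) (j L) = L0 \<theta>) sequentially"
      unfolding eventually_sequentially using pair_exact[OF True] par by blast
    then show ?thesis by (rule tendsto_eventually)
  next
    case False
    define r where "r = (sin (2 * \<theta>))\<^sup>2"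
    have r: "0 \<le> r" "r < 1" using False r_le1[of \<theta>] unfolding r_def by auto
    have "((\<lambda>L. Corr \<theta> (a L, b L) (j L) - L0 \<theta>) \<longlongrightarrow> 0) sequentially"
    proof (rule Lim_null_comparison)
      show "eventually (\<lambda>L. norm (Corr \<theta> (a L, b L) (j L) - L0 \<theta>) \<le> 2 * r ^ (min (a L) (b L) - 1)) sequentially"
        unfolding eventually_sequentially r_def using pair_err j_nb by (metis real_norm_def)
      show "((\<lambda>L. 2 * r ^ (min (a L) (b L) - 1)) \<longlongrightarrow> 0) sequentially"
        by (rule pow_to_zero[OF r filterlim_minus1[OF min_inf]])
    qed
    then show ?thesis by (simp add: LIM_zero_iff)
  qed
  have "(\<lambda>L. complex_of_real (Corr \<theta> (a L, b L) (j L))) \<longlonglongrightarrow> complex_of_real (whip_limit \<theta>)"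
    unfolding whip_limit_eq by (rule tendsto_of_real[OF real])
  then show ?thesis using ev by (rule Lim_transform_eventually)
qed


lemma nn_pairs_eq: "nn_pairs L = (\<lambda>p. (p, (fst p + 1, snd p))) ` ({0..<L-1} \<times> {0..<L})
    \<union> (\<lambda>p. (p, (fst p, snd p + 1))) ` ({0..<L} \<times> {0..<L-1})"
  by (auto simp: nn_pairs_def lattice_def image_iff)

lemma nn_sum: "(\<Sum>x\<in>nn_pairs L. f x) = (\<Sum>p\<in>{0..<L-1} \<times> {0..<L}. f (p, (fst p + 1, snd p)))
    + (\<Sum>p\<in>{0..<L} \<times> {0..<L-1}. f (p, (fst p, snd p + 1)))"
proof -
  define h1 where "h1 = (\<lambda>p::site. (p, (fst p + 1, snd p)))"
  define h2 where "h2 = (\<lambda>p::site. (p, (fst p, snd p + 1)))"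
  have inj1: "inj_on h1 A" for A unfolding h1_def by (auto intro: inj_onI)
  have inj2: "inj_on h2 A" for A unfolding h2_def by (auto intro: inj_onI)
  have disj: "h1 ` ({0..<L-1} \<times> {0..<L}) \<inter> h2 ` ({0..<L} \<times> {0..<L-1}) = {}"
    unfolding h1_def h2_def by auto
  have eq: "nn_pairs L = h1 ` ({0..<L-1} \<times> {0..<L}) \<union> h2 ` ({0..<L} \<times> {0..<L-1})"
    unfolding h1_def h2_def by (rule nn_pairs_eq)
  have "(\<Sum>x\<in>nn_pairs L. f x) = sum f (h1 ` ({0..<L-1} \<times> {0..<L})) + sum f (h2 ` ({0..<L} \<times> {0..<L-1}))"
    unfolding eq by (rule sum.union_disjoint) (use disj in simp_all)
  also have "\<dots> = (\<Sum>p\<in>{0..<L-1} \<times> {0..<L}. f (h1 p)) + (\<Sum>p\<in>{0..<L} \<times> {0..<L-1}. f (h2 p))"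
    using sum.reindex[OF inj1, of f] sum.reindex[OF inj2, of f] by (simp add: o_def)
  finally show ?thesis unfolding h1_def h2_def .
qed

lemma sum_shift_bound:
  assumes "0 \<le> r" "r < (1::real)"
  shows "(\<Sum>a\<in>{0..<L}. r ^ (a - 1)) \<le> 1 + 1 / (1 - r)"
proof -
  have "(\<Sum>a\<in>{0..<L}. r ^ (a - 1)) \<le> (\<Sum>a<Suc L. r ^ (a - 1))"
    by (rule sum_mono2) (use assms in auto)
  also have "\<dots> = 1 + (\<Sum>a<L. r ^ a)" by (subst sum.lessThan_Suc_shift) simp
  also have "(\<Sum>a<L. r ^ a) = (1 - r ^ L) / (1 - r)" using assms by (simp add: sum_gp_strict)
  also have "\<dots> \<le> 1 / (1 - r)" using assms by (intro divide_right_mono) auto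
  finally show ?thesis by simp
qed

lemma sum_Q_bound:
  assumes "0 \<le> r" "r < (1::real)"
  shows "(\<Sum>p\<in>{0..<L} \<times> {0..<L}. 2 * r ^ (min (fst p) (snd p) - 1)) \<le> 4 * real L * (1 + 1 / (1 - r))"
proof -
  define T where "T = (\<Sum>a\<in>{0..<L}. r ^ (a - 1))"
  have "(\<Sum>p\<in>{0..<L} \<times> {0..<L}. 2 * r ^ (min (fst p) (snd p) - 1)) \<le>
        (\<Sum>p\<in>{0..<L} \<times> {0..<L}. 2 * r ^ (fst p - 1) + 2 * r ^ (snd p - 1))"
  proof (rule sum_mono)
    fix p :: site
    have "r ^ (min (fst p) (snd p) - 1) \<le> r ^ (fst p - 1) + r ^ (snd p - 1)"
      using assms by (cases "fst p \<le> snd p") (auto simp: min_def)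
    then show "2 * r ^ (min (fst p) (snd p) - 1) \<le> 2 * r ^ (fst p - 1) + 2 * r ^ (snd p - 1)" by simp
  qed
  also have "\<dots> = 2 * real L * T + 2 * real L * T"
  proof -
    have s1: "(\<Sum>p\<in>{0..<L} \<times> {0..<L}. r ^ (fst p - 1)) = (\<Sum>a\<in>{0..<L}. \<Sum>b\<in>{0..<L}. r ^ (a - 1))"
      by (subst sum.cartesian_product) (simp add: split_def)
    have s2: "(\<Sum>p\<in>{0..<L} \<times> {0..<L}. r ^ (snd p - 1)) = (\<Sum>a\<in>{0..<L}. \<Sum>b\<in>{0..<L}. r ^ (b - 1))"
      by (subst sum.cartesian_product) (simp add: split_def)
    have "(\<Sum>p\<in>{0..<L} \<times> {0..<L}. 2 * r ^ (fst p - 1) + 2 * r ^ (snd p - 1)) =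
        2 * (\<Sum>p\<in>{0..<L} \<times> {0..<L}. r ^ (fst p - 1)) + 2 * (\<Sum>p\<in>{0..<L} \<times> {0..<L}. r ^ (snd p - 1))"
      by (simp add: sum.distrib sum_distrib_left)
    also have "\<dots> = 2 * real L * T + 2 * real L * T"
      unfolding s1 s2 T_def by (simp add: sum_distrib_left[symmetric] mult.commute)
    finally show ?thesis .
  qed
  also have "\<dots> \<le> 4 * real L * (1 + 1 / (1 - r))"
  proof -
    have "real L * T \<le> real L * (1 + 1 / (1 - r))"
      using sum_shift_bound[OF assms, of L] unfolding T_def[symmetric] by (intro mult_left_mono) auto
    then show ?thesis by (simp add: mult.commute)
  qed
  finally show ?thesis .
qed


definition avg :: "real \<Rightarrow> nat \<Rightarrow> real" where
  "avg \<theta> L = 1 / (2 * real L * (real L - 1)) * (\<Sum>x\<in>nn_pairs L. Corr \<theta> (fst x) (snd x))"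

lemma nn_in_lattice: "x \<in> nn_pairs L \<Longrightarrow> fst x \<in> lattice L \<and> snd x \<in> lattice L"
  by (auto simp: nn_pairs_def)

lemma nn_child: "x \<in> nn_pairs L \<Longrightarrow> snd x = (fst (fst x) + 1, snd (fst x)) \<or> snd x = (fst (fst x), snd (fst x) + 1)"
  by (auto simp: nn_pairs_def)

lemma energy_eq: "ising_energy L \<theta> = complex_of_real (- avg \<theta> L)"
proof -
  have "(\<Sum>(i, j)\<in>nn_pairs L. whip_ZZ L \<theta> i j) = (\<Sum>x\<in>nn_pairs L. complex_of_real (Corr \<theta> (fst x) (snd x)))"
    by (rule sum.cong) (auto simp: split_def whip_ZZ_Corr dest: nn_in_lattice)
  then show ?thesis by (simp add: ising_energy_def avg_def)
qed

lemma card_nn: "L \<ge> 2 \<Longrightarrow> (\<Sum>x\<in>nn_pairs L. (c::real)) = 2 * real L * (real L - 1) * c"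
proof -
  assume L: "L \<ge> 2"
  have "(\<Sum>x\<in>nn_pairs L. c) = real ((L - 1) * L) * c + real (L * (L - 1)) * c"
    by (subst nn_sum) simp
  also have "\<dots> = 2 * real L * (real L - 1) * c" using L by (simp add: of_nat_diff algebra_simps)
  finally show ?thesis .
qed

lemma avg_diff:
  assumes L: "L \<ge> 2"
  shows "avg \<theta> L - L0 \<theta> = 1 / (2 * real L * (real L - 1)) * (\<Sum>x\<in>nn_pairs L. Corr \<theta> (fst x) (snd x) - L0 \<theta>)"
proof -
  define N where "N = 2 * real L * (real L - 1)"
  have N: "N > 0" using L unfolding N_def by simp
  define S where "S = (\<Sum>x\<in>nn_pairs L. Corr \<theta> (fst x) (snd x))"
  define D where "D = (\<Sum>x\<in>nn_pairs L. Corr \<theta> (fst x) (snd x) - L0 \<theta>)"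
  have DS: "D = S - N * L0 \<theta>" unfolding S_def D_def N_def
    by (subst sum_subtractf) (simp only: card_nn[OF L])
  have A: "avg \<theta> L = 1 / N * S" unfolding avg_def S_def N_def ..
  have "avg \<theta> L - L0 \<theta> = 1 / N * D" unfolding A DS using N by (simp add: field_simps)
  then show ?thesis unfolding D_def N_def .
qed

lemma part3:
  "(\<lambda>L. ising_energy L \<theta>) \<longlonglongrightarrow> complex_of_real (- whip_limit \<theta>)"
proof -
  have real: "(\<lambda>L. avg \<theta> L) \<longlonglongrightarrow> L0 \<theta>"
  proof (cases "(sin (2 * \<theta>))\<^sup>2 = 1")
    case True
    have "avg \<theta> L = L0 \<theta>" if L: "L \<ge> 2" for L
    proof -
      have "(\<Sum>x\<in>nn_pairs L. Corr \<theta> (fst x) (snd x) - L0 \<theta>) = 0"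
      proof (rule sum.neutral, rule ballI)
        fix x assume "x \<in> nn_pairs L"
        then have "fst x \<in> par (snd x)" using nn_child par_child by (metis prod.collapse)
        then show "Corr \<theta> (fst x) (snd x) - L0 \<theta> = 0" using pair_exact[OF True] by simp
      qed
      then show ?thesis using avg_diff[OF L, of \<theta>] by simp
    qed
    then have "eventually (\<lambda>L. avg \<theta> L = L0 \<theta>) sequentially"
      unfolding eventually_sequentially by blast
    then show ?thesis by (rule tendsto_eventually)
  next
    case False
    define r where "r = (sin (2 * \<theta>))\<^sup>2"
    have r: "0 \<le> r" "r < 1" using False r_le1[of \<theta>] unfolding r_def by auto
    define K where "K = 1 + 1 / (1 - r)"
    define g where "g p = 2 * r ^ (min (fst p) (snd p) - 1)" for p :: site
    have g0: "0 \<le> g p" for p unfolding g_def using r by simp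
    have bound: "\<bar>avg \<theta> L - L0 \<theta>\<bar> \<le> 8 * K / real L" if L: "L \<ge> 2" for L
    proof -
      define N where "N = 2 * real L * (real L - 1)"
      have N: "N > 0" unfolding N_def using L by simp
      have "(\<Sum>x\<in>nn_pairs L. \<bar>Corr \<theta> (fst x) (snd x) - L0 \<theta>\<bar>) =
          (\<Sum>p\<in>{0..<L-1} \<times> {0..<L}. \<bar>Corr \<theta> p (fst p + 1, snd p) - L0 \<theta>\<bar>)
        + (\<Sum>p\<in>{0..<L} \<times> {0..<L-1}. \<bar>Corr \<theta> p (fst p, snd p + 1) - L0 \<theta>\<bar>)"
        using nn_sum[where f="\<lambda>x. \<bar>Corr \<theta> (fst x) (snd x) - L0 \<theta>\<bar>"] by simp
      also have "\<dots> \<le> (\<Sum>p\<in>{0..<L} \<times> {0..<L}. g p) + (\<Sum>p\<in>{0..<L} \<times> {0..<L}. g p)"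
      proof (rule add_mono)
        have "(\<Sum>p\<in>{0..<L-1} \<times> {0..<L}. \<bar>Corr \<theta> p (fst p + 1, snd p) - L0 \<theta>\<bar>) \<le> (\<Sum>p\<in>{0..<L-1} \<times> {0..<L}. g p)"
          by (rule sum_mono) (use pair_err[of "(fst p + 1, snd p)" "fst p" "snd p" \<theta> for p] in \<open>auto simp: g_def r_def\<close>)
        also have "\<dots> \<le> (\<Sum>p\<in>{0..<L} \<times> {0..<L}. g p)"
          by (rule sum_mono2) (auto simp: g0)
        finally show "(\<Sum>p\<in>{0..<L-1} \<times> {0..<L}. \<bar>Corr \<theta> p (fst p + 1, snd p) - L0 \<theta>\<bar>) \<le> (\<Sum>p\<in>{0..<L} \<times> {0..<L}. g p)" .
        have "(\<Sum>p\<in>{0..<L} \<times> {0..<L-1}. \<bar>Corr \<theta> p (fst p, snd p + 1) - L0 \<theta>\<bar>) \<le> (\<Sum>p\<in>{0..<L} \<times> {0..<L-1}. g p)"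
          by (rule sum_mono) (use pair_err[of "(fst p, snd p + 1)" "fst p" "snd p" \<theta> for p] in \<open>auto simp: g_def r_def\<close>)
        also have "\<dots> \<le> (\<Sum>p\<in>{0..<L} \<times> {0..<L}. g p)"
          by (rule sum_mono2) (auto simp: g0)
        finally show "(\<Sum>p\<in>{0..<L} \<times> {0..<L-1}. \<bar>Corr \<theta> p (fst p, snd p + 1) - L0 \<theta>\<bar>) \<le> (\<Sum>p\<in>{0..<L} \<times> {0..<L}. g p)" .
      qed
      also have "\<dots> \<le> 8 * real L * K"
        using sum_Q_bound[OF r, of L] unfolding g_def K_def by simp
      finally have S: "(\<Sum>x\<in>nn_pairs L. \<bar>Corr \<theta> (fst x) (snd x) - L0 \<theta>\<bar>) \<le> 8 * real L * K" .
      have "\<bar>avg \<theta> L - L0 \<theta>\<bar> = \<bar>1 / N\<bar> * \<bar>\<Sum>x\<in>nn_pairs L. Corr \<theta> (fst x) (snd x) - L0 \<theta>\<bar>"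
        using avg_diff[OF L, of \<theta>] unfolding N_def[symmetric] by (simp only: abs_mult)
      also have "\<dots> = 1 / N * \<bar>\<Sum>x\<in>nn_pairs L. Corr \<theta> (fst x) (snd x) - L0 \<theta>\<bar>" using N by simp
      also have "\<dots> \<le> 1 / N * (8 * real L * K)"
        using N S order.trans[OF sum_abs] by (intro mult_left_mono) auto
      also have "\<dots> \<le> 8 * K / real L"
      proof -
        have K0: "K \<ge> 0" unfolding K_def using r by simp
        have "real L * real L \<le> N" unfolding N_def using L
          by (simp add: algebra_simps)
        then have "8 * real L * K * real L \<le> 8 * K * N" using K0 by (simp add: algebra_simps mult_left_mono)
        then show ?thesis using N L by (simp add: field_simps)
      qed
      finally show ?thesis .
    qed
    have "((\<lambda>L. avg \<theta> L - L0 \<theta>) \<longlongrightarrow> 0) sequentially"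
    proof (rule Lim_null_comparison)
      show "eventually (\<lambda>L. norm (avg \<theta> L - L0 \<theta>) \<le> 8 * K / real L) sequentially"
        unfolding eventually_sequentially using bound by auto
      show "(\<lambda>L. 8 * K / real L) \<longlonglongrightarrow> 0" by (rule lim_const_over_n)
    qed
    then show ?thesis by (simp add: LIM_zero_iff)
  qed
  show ?thesis unfolding energy_eq whip_limit_eq
    by (intro tendsto_of_real tendsto_minus real)
qed


definition TT :: "nat \<Rightarrow> real" where
  "TT n = 4 ^ (n - 1) * Gamma (real n - 1 / 2) / (sqrt pi * fact n)"

lemma TT_1: "TT (Suc 0) = 1"
  by (simp add: TT_def Gamma_one_half_real)

lemma TT_Suc: "TT (Suc (Suc n)) = TT (Suc n) * (4 * real n + 2) / (real n + 2)"
proof -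
  have nz: "real n + 1 / 2 \<notin> \<int>\<^sub>\<le>\<^sub>0"
    using nonpos_Ints_nonpos[of "real n + 1/2"] by force
  have g: "Gamma (real (Suc (Suc n)) - 1 / 2) = (real n + 1 / 2) * Gamma (real (Suc n) - 1 / 2)"
  proof -
    have e1: "real (Suc (Suc n)) - 1 / 2 = (real n + 1 / 2) + 1" by simp
    have e2: "real (Suc n) - 1 / 2 = real n + 1 / 2" by simp
    show ?thesis unfolding e1 e2 by (rule Gamma_plus1[OF nz])
  qed
  have p: "sqrt pi \<noteq> 0" "(fact n :: real) \<noteq> 0" "real n + 1 \<noteq> 0" "real n + 2 \<noteq> 0" by auto
  define G where "G = Gamma (real (Suc n) - 1 / 2)"
  have "TT (Suc (Suc n)) = (4 * 4 ^ n * ((real n + 1 / 2) * G)) / (sqrt pi * ((real n + 2) * ((real n + 1) * fact n)))"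
    unfolding TT_def g G_def by (simp add: algebra_simps)
  also have "\<dots> = (4 ^ n * G / (sqrt pi * ((real n + 1) * fact n))) * (4 * real n + 2) / (real n + 2)"
    using p by (simp add: divide_simps)
  also have "4 ^ n * G / (sqrt pi * ((real n + 1) * fact n)) = TT (Suc n)"
    unfolding TT_def G_def by (simp add: algebra_simps)
  finally show ?thesis .
qed

lemma TT_pos: "n \<ge> 1 \<Longrightarrow> TT n > 0"
  unfolding TT_def by (intro divide_pos_pos mult_pos_pos Gamma_real_pos) auto

lemma gchoose_half: "((1/2 :: real) gchoose (Suc n)) * (-4) ^ Suc n = - 2 * TT (Suc n)"
proof (induction n)
  case 0 then show ?case by (simp add: TT_1)
next
  case (Suc n)
  have rec: "((1/2 :: real) gchoose Suc (Suc n)) = (1/2 - real (Suc n)) * ((1/2 :: real) gchoose (Suc n)) / real (Suc (Suc n))"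
    using gbinomial_mult_1[of "1/2 :: real" "Suc n"] by (simp add: field_simps)
  have "((1/2 :: real) gchoose Suc (Suc n)) * (-4) ^ Suc (Suc n)
      = (((1/2 :: real) gchoose (Suc n)) * (-4) ^ Suc n) * ((-4) * (1/2 - real (Suc n)) / real (Suc (Suc n)))"
    unfolding rec by (simp add: field_simps)
  also have "\<dots> = - 2 * TT (Suc (Suc n))"
    unfolding Suc.IH TT_Suc by (simp add: field_simps)
  finally show ?case .
qed


lemma series_inner:
  assumes y: "\<bar>4 * y\<bar> < (1::real)"
  shows "(\<lambda>k. TT (Suc k) * y ^ Suc k) sums ((1 - sqrt (1 - 4 * y)) / 2)"
proof -
  define f where "f n = ((1/2 :: real) gchoose n) * (- 4 * y) ^ n" for n
  have "f sums ((1 + - 4 * y) powr (1/2))"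
    unfolding f_def by (rule gen_binomial_real) (use y in simp)
  moreover have "(1 + - 4 * y) powr (1/2) = sqrt (1 - 4 * y)"
    using y by (simp add: powr_half_sqrt)
  ultimately have "f sums (sqrt (1 - 4 * y) - f 0 + f 0)" by simp
  then have "(\<lambda>n. f (Suc n)) sums (sqrt (1 - 4 * y) - f 0)" by (subst sums_Suc_iff)
  moreover have "(\<lambda>n. f (Suc n)) = (\<lambda>n. - 2 * (TT (Suc n) * y ^ Suc n))"
  proof
    fix n
    show "f (Suc n) = - 2 * (TT (Suc n) * y ^ Suc n)"
      unfolding f_def power_mult_distrib[of "-4" y] using gchoose_half[of n]
      by (metis (no_types, lifting) mult.assoc mult.commute mult.left_commute)
  qed
  moreover have "f 0 = 1" by (simp add: f_def)
  ultimately have "(\<lambda>n. - 2 * (TT (Suc n) * y ^ Suc n)) sums (sqrt (1 - 4 * y) - 1)"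
    by simp
  note h = sums_mult[OF this, of "- 1 / 2"]
  have eq: "(\<lambda>n. - 1 / 2 * (- 2 * (TT (Suc n) * y ^ Suc n))) = (\<lambda>n. TT (Suc n) * y ^ Suc n)" by simp
  have eq2: "- 1 / 2 * (sqrt (1 - 4 * y) - 1) = (1 - sqrt (1 - 4 * y)) / 2" by (simp add: algebra_simps)
  show ?thesis using h unfolding eq eq2 .
qed

definition uu :: "nat \<Rightarrow> real" where "uu k = TT (Suc k) * real (Suc k) / 4 ^ k"

lemma uu_0: "uu 0 = 1" by (simp add: uu_def TT_1)

lemma uu_Suc: "uu (Suc k) = uu k * (2 * real k + 1) / (2 * real k + 2)"
proof -
  have p: "(4::real) ^ k \<noteq> 0" "real k + 2 \<noteq> 0" "2 * real k + 2 \<noteq> 0" by auto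
  show ?thesis unfolding uu_def TT_Suc using p by (simp add: divide_simps) (simp add: algebra_simps)
qed

lemma uu_nonneg: "uu k \<ge> 0"
  unfolding uu_def using TT_pos[of "Suc k"] by simp

lemma uu_sq: "(uu k)\<^sup>2 \<le> 1 / (2 * real k + 1)"
proof (induction k)
  case 0 then show ?case by (simp add: uu_0)
next
  case (Suc k)
  have "(uu (Suc k))\<^sup>2 = (uu k)\<^sup>2 * ((2 * real k + 1) / (2 * real k + 2))\<^sup>2"
    unfolding uu_Suc by (simp add: power_mult_distrib power_divide)
  also have "\<dots> \<le> 1 / (2 * real k + 1) * ((2 * real k + 1) / (2 * real k + 2))\<^sup>2"
    by (rule mult_right_mono[OF Suc.IH]) simp
  also have "\<dots> \<le> 1 / (2 * real (Suc k) + 1)"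
  proof -
    have "(2 * real k + 1) * (2 * real k + 3) \<le> (2 * real k + 2)\<^sup>2" by (simp add: power2_eq_square algebra_simps)
    then show ?thesis by (simp add: power2_eq_square divide_simps) (simp add: algebra_simps)
  qed
  finally show ?case .
qed

lemma uu_lim: "uu \<longlonglongrightarrow> 0"
proof -
  have "((\<lambda>n. uu n - 0) \<longlongrightarrow> 0) sequentially"
  proof (rule Lim_null_comparison)
    show "eventually (\<lambda>n. norm (uu n - 0) \<le> sqrt (1 / real (Suc n))) sequentially"
    proof (rule always_eventually, rule allI)
      fix n
      have "(uu n)\<^sup>2 \<le> 1 / real (Suc n)"
        using uu_sq[of n] by (rule order.trans) (simp add: divide_simps)
      then show "norm (uu n - 0) \<le> sqrt (1 / real (Suc n))"
        using uu_nonneg[of n] real_le_rsqrt by simp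
    qed
    have "(\<lambda>n. 1 / real (Suc n)) \<longlonglongrightarrow> 0"
      using LIMSEQ_Suc[OF lim_1_over_n] by simp
    then show "(\<lambda>n. sqrt (1 / real (Suc n))) \<longlonglongrightarrow> 0"
      using tendsto_real_sqrt by fastforce
  qed
  then show ?thesis by simp
qed

lemma series_end: "(\<lambda>k. TT (Suc k) / 4 ^ k) sums 2"
proof -
  have "(\<lambda>n. uu n - uu (Suc n)) sums (uu 0 - 0)" by (rule telescope_sums'[OF uu_lim])
  then have "(\<lambda>n. 2 * (uu n - uu (Suc n))) sums 2" using sums_mult[of _ _ 2] uu_0 by fastforce
  moreover have "2 * (uu n - uu (Suc n)) = TT (Suc n) / 4 ^ n" for n
  proof -
    have p: "(4::real) ^ n \<noteq> 0" "2 * real n + 2 \<noteq> 0" by auto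
    show ?thesis unfolding uu_Suc unfolding uu_def using p by (simp add: divide_simps) (simp add: algebra_simps)
  qed
  ultimately show ?thesis by simp
qed


lemma part2: "(\<lambda>k. whip_term \<theta> (Suc k)) sums (- whip_limit \<theta>)"
proof -
  define x where "x = cos \<theta> * sin \<theta>"
  define s where "s = sin (2 * \<theta>)"
  have sx: "s = 2 * x" unfolding s_def x_def by (simp add: sin_double)
  have wt: "whip_term \<theta> (Suc k) = TT (Suc k) * x ^ (2 * k + 1)" for k
    unfolding whip_term_def TT_def x_def by simp
  have s2: "s\<^sup>2 \<le> 1" unfolding s_def using abs_sin_le_one[of "2 * \<theta>"] by (simp add: abs_square_le_1)
  have c: "\<bar>cos (2 * \<theta>)\<bar> = sqrt (1 - s\<^sup>2)"
    unfolding s_def by (simp add: cos_squared_eq[symmetric])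
  consider "x = 0" | "x \<noteq> 0" "s\<^sup>2 < 1" | "s\<^sup>2 = 1" using s2 sx by fastforce
  then show ?thesis
  proof cases
    case 1
    then have "s = 0" using sx by simp
    then have "whip_limit \<theta> = 0" by (simp add: whip_limit_def s_def)
    moreover have "whip_term \<theta> (Suc k) = 0" for k using 1 by (simp add: wt)
    ultimately show ?thesis by simp
  next
    case 2
    have y: "\<bar>4 * x\<^sup>2\<bar> < 1" using 2 sx by (simp add: power2_eq_square)
    from sums_divide[OF series_inner[OF y], of x]
    have h: "(\<lambda>k. TT (Suc k) * (x\<^sup>2) ^ Suc k / x) sums ((1 - sqrt (1 - 4 * x\<^sup>2)) / 2 / x)" .
    have eq: "(\<lambda>k. TT (Suc k) * (x\<^sup>2) ^ Suc k / x) = (\<lambda>k. whip_term \<theta> (Suc k))"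
    proof
      fix k
      have "(x\<^sup>2) ^ Suc k = x ^ (2 * Suc k)" by (simp only: power_mult)
      also have "\<dots> = x ^ Suc (2 * k + 1)" by simp
      also have "\<dots> = x * x ^ (2 * k + 1)" by (rule power_Suc)
      finally show "TT (Suc k) * (x\<^sup>2) ^ Suc k / x = whip_term \<theta> (Suc k)" using 2 by (simp add: wt)
    qed
    have "s \<noteq> 0" using 2 sx by simp
    then have "(1 - sqrt (1 - 4 * x\<^sup>2)) / 2 / x = - whip_limit \<theta>"
      unfolding whip_limit_def c s_def[symmetric] using sx
      by (simp add: power_mult_distrib field_simps)
    then show ?thesis using h unfolding eq by simp
  next
    case 3
    have x2: "x\<^sup>2 = 1 / 4" using 3 sx by (simp add: power_mult_distrib)
    have eq: "(\<lambda>k. x * (TT (Suc k) / 4 ^ k)) = (\<lambda>k. whip_term \<theta> (Suc k))"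
    proof
      fix k
      have "x ^ (2 * k + 1) = x * (x\<^sup>2) ^ k" by (simp add: power_mult)
      then show "x * (TT (Suc k) / 4 ^ k) = whip_term \<theta> (Suc k)" unfolding wt x2 by (simp add: power_divide)
    qed
    have "s \<noteq> 0" using 3 by auto
    have "whip_limit \<theta> = - s"
    proof -
      have "\<bar>cos (2 * \<theta>)\<bar> = 0" using c 3 by simp
      moreover have "1 / s = s" using 3 \<open>s \<noteq> 0\<close> by (simp add: power2_eq_square field_simps)
      ultimately show ?thesis using \<open>s \<noteq> 0\<close> unfolding whip_limit_def s_def[symmetric]
        by (simp add: minus_divide_left)
    qed
    moreover have "x * 2 = s" using sx by simp
    ultimately show ?thesis using sums_mult[OF series_end, of x] unfolding eq by simp
  qed
qed


theorem mainTheorem7: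
  fixes a b :: "nat \<Rightarrow> nat" and j :: "nat \<Rightarrow> site" and \<theta> :: real
  assumes j_nb: "\<forall>L\<ge>2. j L = (a L + 1, b L) \<or> j L = (a L, b L + 1)"
    and j_in: "\<forall>L\<ge>2. j L \<in> lattice L"
    and min_inf: "filterlim (\<lambda>L. min (a L) (b L)) at_top sequentially"
  shows "(\<lambda>L. whip_ZZ L \<theta> (a L, b L) (j L)) \<longlonglongrightarrow> complex_of_real (whip_limit \<theta>)
    \<and> (\<lambda>k. whip_term \<theta> (Suc k)) sums (- whip_limit \<theta>)
    \<and> (\<lambda>L. ising_energy L \<theta>) \<longlonglongrightarrow> complex_of_real (- whip_limit \<theta>)"
  using part1[OF j_nb j_in min_inf] part2[of \<theta>] part3[of \<theta>] by blast

end
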